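(* The class $\mathcal M_2$ of $2$-modular matroids is closed under duality: if $M\in\mathcal M_2$ then $M^*\in\mathcal M_2$.
   Context: An integer matrix $A$ is $\Delta$-modular if the determinant of every $\operatorname{rank}(A)\times\operatorname{rank}(A)$ submatrix has absolute value at most $\Delta$. $\mathcal M_\Delta$ is the class of matroids that are isomorphic to the vector matroid over $\mathbb{R}$ of the columns of some $\Delta$-modular matrix. *)

theory Defs
  imports "Jordan_Normal_Form.DL_Rank" "Jordan_Normal_Form.DL_Submatrix"
begin

definition matroid :: "'a set \<Rightarrow> ('a set \<Rightarrow> bool) \<Rightarrow> bool" where
  "matroid E indep \<longleftrightarrow>
     finite E \<and>
     (\<forall>X. indep X \<longrightarrow> X \<subseteq> E) \<and>
     indep {} \<and>
     (\<forall>X Y. indep Y \<and> X \<subseteq> Y \<longrightarrow> indep X) \<and>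
     (\<forall>X Y. indep X \<and> indep Y \<and> card X < card Y \<longrightarrow>
        (\<exists>y \<in> Y - X. indep (insert y X)))"

definition basis_of :: "'a set \<Rightarrow> ('a set \<Rightarrow> bool) \<Rightarrow> 'a set \<Rightarrow> bool" where
  "basis_of E indep B \<longleftrightarrow> indep B \<and> (\<forall>X. indep X \<and> B \<subseteq> X \<longrightarrow> X = B)"

definition dual_indep :: "'a set \<Rightarrow> ('a set \<Rightarrow> bool) \<Rightarrow> 'a set \<Rightarrow> bool" where
  "dual_indep E indep X \<longleftrightarrow> X \<subseteq> E \<and> (\<exists>B. basis_of E indep B \<and> X \<inter> B = {})"

definition matroid_iso ::
  "'a set \<Rightarrow> ('a set \<Rightarrow> bool) \<Rightarrow> 'b set \<Rightarrow> ('b set \<Rightarrow> bool) \<Rightarrow> bool" where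
  "matroid_iso E indep E' indep' \<longleftrightarrow>
     matroid E indep \<and> matroid E' indep' \<and>
     (\<exists>f. bij_betw f E E' \<and> (\<forall>X. X \<subseteq> E \<longrightarrow> (indep X \<longleftrightarrow> indep' (f ` X))))"

definition col_indep :: "int mat \<Rightarrow> nat set \<Rightarrow> bool" where
  "col_indep A S \<longleftrightarrow> S \<subseteq> {..<dim_col A} \<and>
     (\<forall>c :: nat \<Rightarrow> real.
        (\<forall>i < dim_row A. (\<Sum>j\<in>S. c j * real_of_int (A $$ (i, j))) = 0)
          \<longrightarrow> (\<forall>j\<in>S. c j = 0))"

definition int_rank :: "int mat \<Rightarrow> nat" where
  "int_rank A = vec_space.rank (dim_row A) (map_mat real_of_int A)"

definition delta_modular :: "int \<Rightarrow> int mat \<Rightarrow> bool" where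
  "delta_modular \<Delta> A \<longleftrightarrow>
     (\<forall>I J. I \<subseteq> {..<dim_row A} \<and> J \<subseteq> {..<dim_col A} \<and>
            card I = int_rank A \<and> card J = int_rank A
        \<longrightarrow> \<bar>det (submatrix A I J)\<bar> \<le> \<Delta>)"

definition in_M_delta :: "int \<Rightarrow> 'a set \<Rightarrow> ('a set \<Rightarrow> bool) \<Rightarrow> bool" where
  "in_M_delta \<Delta> E indep \<longleftrightarrow>
     (\<exists>A :: int mat. delta_modular \<Delta> A \<and>
        matroid_iso E indep {..<dim_col A} (col_indep A))"

end

theory Submission
  imports Defs "Jordan_Normal_Form.DL_Rank_Submatrix"
begin


definition rind :: "(nat \<Rightarrow> nat \<Rightarrow> real) \<Rightarrow> nat set \<Rightarrow> nat set \<Rightarrow> bool" where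
  "rind M Rw S \<longleftrightarrow> (\<forall>c. (\<forall>i\<in>Rw. (\<Sum>j\<in>S. c j * M i j) = 0) \<longrightarrow> (\<forall>j\<in>S. c j = 0))"

lemma elim_lemma:
  fixes a :: "nat \<Rightarrow> nat \<Rightarrow> real"
  assumes "finite R" "finite V" "card R < card V"
  shows "\<exists>x. (\<exists>v\<in>V. x v \<noteq> 0) \<and> (\<forall>i\<in>R. (\<Sum>v\<in>V. a i v * x v) = 0)"
  using assms
proof (induction R arbitrary: V a rule: finite_induct)
  case empty
  then obtain v where "v \<in> V" by fastforce
  then show ?case by (intro exI[of _ "\<lambda>_. 1"]) auto
next
  case (insert i R)
  show ?case
  proof (cases "\<forall>v\<in>V. a i v = 0")
    case True
    have "card R < card V" using insert.prems insert.hyps by simp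
    from insert.IH[OF insert.prems(1) this] obtain x where
      "\<exists>v\<in>V. x v \<noteq> 0" "\<forall>i\<in>R. (\<Sum>v\<in>V. a i v * x v) = 0" by blast
    then show ?thesis using True by (intro exI[of _ x]) auto
  next
    case False
    then obtain v0 where v0: "v0 \<in> V" "a i v0 \<noteq> 0" by blast
    define V' where "V' = V - {v0}"
    define a' where "a' = (\<lambda>r v. a r v - a r v0 * a i v / a i v0)"
    have fV': "finite V'" using insert.prems V'_def by auto
    have cV': "card R < card V'" using insert.prems insert.hyps v0 unfolding V'_def by auto
    from insert.IH[OF fV' cV', of a'] obtain x' where
      x': "\<exists>v\<in>V'. x' v \<noteq> 0" "\<forall>r\<in>R. (\<Sum>v\<in>V'. a' r v * x' v) = 0" by blast
    define x where "x = (\<lambda>v. if v = v0 then - (\<Sum>w\<in>V'. a i w * x' w) / a i v0 else x' v)"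
    have Vsplit: "V = insert v0 V'" "v0 \<notin> V'" using v0 V'_def by auto
    have sumx: "(\<Sum>v\<in>V. b v * x v) = b v0 * x v0 + (\<Sum>v\<in>V'. b v * x' v)" for b
      using Vsplit fV' unfolding x_def by (simp add: sum.insert_if) (intro sum.cong; auto)
    have eqi: "(\<Sum>v\<in>V. a i v * x v) = 0"
      unfolding sumx using v0 by (simp add: x_def)
    have eqr: "(\<Sum>v\<in>V. a r v * x v) = 0" if "r \<in> R" for r
    proof -
      have "(\<Sum>v\<in>V. a r v * x v) = a r v0 * x v0 + (\<Sum>v\<in>V'. a r v * x' v)" by (rule sumx)
      also have "\<dots> = (\<Sum>v\<in>V'. a r v * x' v) - a r v0 / a i v0 * (\<Sum>v\<in>V'. a i v * x' v)"
        using v0 by (simp add: x_def)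
      also have "\<dots> = (\<Sum>v\<in>V'. a' r v * x' v)"
        unfolding a'_def by (simp add: left_diff_distrib sum_subtractf sum_distrib_left mult.assoc)
      finally show ?thesis using x' that by simp
    qed
    have "\<exists>v\<in>V. x v \<noteq> 0" using x' Vsplit unfolding x_def by auto
    then show ?thesis using eqi eqr by (intro exI[of _ x]) auto
  qed
qed



lemma span_lemma:
  assumes "finite X" "rind M Rw X" "\<not> rind M Rw (insert y X)" "y \<notin> X"
  shows "\<exists>d. \<forall>i\<in>Rw. M i y = (\<Sum>x\<in>X. d x * M i x)"
proof -
  from assms(3) obtain c j where h: "\<forall>i\<in>Rw. (\<Sum>j\<in>insert y X. c j * M i j) = 0"
    and j: "j \<in> insert y X" "c j \<noteq> 0" unfolding rind_def by blast
  have h2: "\<forall>i\<in>Rw. c y * M i y + (\<Sum>j\<in>X. c j * M i j) = 0"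
    using h assms(1,4) by simp
  have cy: "c y \<noteq> 0"
  proof
    assume "c y = 0"
    then have "\<forall>i\<in>Rw. (\<Sum>j\<in>X. c j * M i j) = 0" using h2 by simp
    then have "\<forall>j\<in>X. c j = 0" using assms(2) unfolding rind_def by blast
    then show False using j \<open>c y = 0\<close> by auto
  qed
  show ?thesis
  proof (intro exI[of _ "\<lambda>x. - c x / c y"] ballI)
    fix i assume i: "i \<in> Rw"
    have "c y * M i y = - (\<Sum>j\<in>X. c j * M i j)" using h2 i by (simp add: eq_neg_iff_add_eq_0)
    then have "M i y = - (\<Sum>j\<in>X. c j * M i j) / c y" using cy by (simp add: field_simps)
    also have "\<dots> = (\<Sum>x\<in>X. - c x / c y * M i x)"
      by (simp add: sum_divide_distrib sum_negf[symmetric])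
    finally show "M i y = (\<Sum>x\<in>X. - c x / c y * M i x)" .
  qed
qed

lemma rind_subset:
  assumes "rind M Rw Y" "X \<subseteq> Y" "finite Y"
  shows "rind M Rw X"
  unfolding rind_def
proof (intro allI impI ballI)
  fix c j assume h: "\<forall>i\<in>Rw. (\<Sum>j\<in>X. c j * M i j) = 0" and j: "j \<in> X"
  define c' where "c' = (\<lambda>j. if j \<in> X then c j else 0)"
  have "\<forall>i\<in>Rw. (\<Sum>j\<in>Y. c' j * M i j) = 0"
  proof
    fix i assume "i \<in> Rw"
    have "(\<Sum>j\<in>Y. c' j * M i j) = (\<Sum>j\<in>X. c' j * M i j)"
      using assms(2,3) by (intro sum.mono_neutral_right) (auto simp: c'_def)
    also have "\<dots> = (\<Sum>j\<in>X. c j * M i j)" by (simp add: c'_def)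
    finally show "(\<Sum>j\<in>Y. c' j * M i j) = 0" using h \<open>i \<in> Rw\<close> by simp
  qed
  then have "c' j = 0" using assms(1) j assms(2) unfolding rind_def by blast
  then show "c j = 0" using j by (simp add: c'_def)
qed

lemma rind_exchange:
  assumes "rind M Rw X" "rind M Rw Y" "card X < card Y" "finite X" "finite Y"
  shows "\<exists>y\<in>Y - X. rind M Rw (insert y X)"
proof (rule ccontr)
  assume "\<not> ?thesis"
  then have nd: "\<And>y. y \<in> Y - X \<Longrightarrow> \<not> rind M Rw (insert y X)" by blast
  define D where "D = (\<lambda>y. if y \<in> X then (\<lambda>x. if x = y then 1 else 0)
      else (SOME d. \<forall>i\<in>Rw. M i y = (\<Sum>x\<in>X. d x * M i x)))"
  have D: "\<forall>i\<in>Rw. M i y = (\<Sum>x\<in>X. D y x * M i x)" if "y \<in> Y" for y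
  proof (cases "y \<in> X")
    case True
    have eq: "(\<Sum>x\<in>X. (if x = y then 1 else 0) * M i x) = M i y" for i
    proof -
      have "(\<Sum>x\<in>X. (if x = y then 1 else 0) * M i x) = (\<Sum>x\<in>X. if x = y then M i x else 0)"
        by (intro sum.cong) auto
      then show ?thesis using True assms(4) by simp
    qed
    have Dy: "D y = (\<lambda>x. if x = y then 1 else 0)" using True by (simp add: D_def)
    show ?thesis unfolding Dy by (intro ballI) (rule eq[symmetric])
  next
    case False
    have "\<exists>d. \<forall>i\<in>Rw. M i y = (\<Sum>x\<in>X. d x * M i x)"
      using span_lemma[OF assms(4,1) nd[of y]] that False by simp
    then have ex: "\<forall>i\<in>Rw. M i y = (\<Sum>x\<in>X. (SOME d. \<forall>i\<in>Rw. M i y = (\<Sum>x\<in>X. d x * M i x)) x * M i x)"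
      by (rule someI_ex)
    have Dy: "D y = (SOME d. \<forall>i\<in>Rw. M i y = (\<Sum>x\<in>X. d x * M i x))" using False by (simp add: D_def)
    show ?thesis unfolding Dy by (rule ex)
  qed
  obtain c where c: "\<exists>v\<in>Y. c v \<noteq> 0" "\<forall>x\<in>X. (\<Sum>y\<in>Y. D y x * c y) = 0"
    using elim_lemma[OF assms(4,5,3), of "\<lambda>x y. D y x"] by blast
  have "\<forall>i\<in>Rw. (\<Sum>y\<in>Y. c y * M i y) = 0"
  proof
    fix i assume i: "i \<in> Rw"
    have "(\<Sum>y\<in>Y. c y * M i y) = (\<Sum>y\<in>Y. c y * (\<Sum>x\<in>X. D y x * M i x))"
      by (rule sum.cong[OF refl]) (metis D i)
    also have "\<dots> = (\<Sum>y\<in>Y. \<Sum>x\<in>X. M i x * (D y x * c y))"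
      unfolding sum_distrib_left by (intro sum.cong refl) (simp add: mult_ac)
    also have "\<dots> = (\<Sum>x\<in>X. \<Sum>y\<in>Y. M i x * (D y x * c y))"
      by (rule sum.swap)
    also have "\<dots> = (\<Sum>x\<in>X. M i x * (\<Sum>y\<in>Y. D y x * c y))"
      by (simp add: sum_distrib_left)
    also have "\<dots> = 0" using c(2) by simp
    finally show "(\<Sum>y\<in>Y. c y * M i y) = 0" .
  qed
  then have "\<forall>y\<in>Y. c y = 0" using assms(2) unfolding rind_def by blast
  then show False using c(1) by auto
qed

lemma vec_matroid: "matroid {..<n} (\<lambda>S. S \<subseteq> {..<n} \<and> rind M Rw S)"
proof -
  have a: "\<forall>X Y. (Y \<subseteq> {..<n} \<and> rind M Rw Y) \<and> X \<subseteq> Y \<longrightarrow> (X \<subseteq> {..<n} \<and> rind M Rw X)"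
  proof (intro allI impI)
    fix X Y assume h: "(Y \<subseteq> {..<n} \<and> rind M Rw Y) \<and> X \<subseteq> Y"
    then have "finite Y" using finite_subset by blast
    then show "X \<subseteq> {..<n} \<and> rind M Rw X"
      using rind_subset[of M Rw Y X] h by blast
  qed
  have b: "\<forall>X Y. (X \<subseteq> {..<n} \<and> rind M Rw X) \<and> (Y \<subseteq> {..<n} \<and> rind M Rw Y) \<and> card X < card Y
     \<longrightarrow> (\<exists>y\<in>Y - X. insert y X \<subseteq> {..<n} \<and> rind M Rw (insert y X))"
  proof (intro allI impI)
    fix X Y assume h: "(X \<subseteq> {..<n} \<and> rind M Rw X) \<and> (Y \<subseteq> {..<n} \<and> rind M Rw Y) \<and> card X < card Y"
    then have fin: "finite X" "finite Y" using finite_subset by auto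
    from rind_exchange[OF _ _ _ fin, of M Rw] h obtain y where "y \<in> Y - X" "rind M Rw (insert y X)" by blast
    then show "\<exists>y\<in>Y - X. insert y X \<subseteq> {..<n} \<and> rind M Rw (insert y X)" using h by blast
  qed
  have c: "rind M Rw {}" by (simp add: rind_def)
  have d: "finite {..<n::nat}" by simp
  show ?thesis unfolding matroid_def
    apply (intro conjI)
    using a b c d by blast+
qed

lemma col_indep_rind: "col_indep A S \<longleftrightarrow> S \<subseteq> {..<dim_col A} \<and>
   rind (\<lambda>i j. real_of_int (A $$ (i,j))) {..<dim_row A} S"
  unfolding col_indep_def rind_def lessThan_iff by (simp only: Ball_def lessThan_iff)

lemma col_indep_matroid: "matroid {..<dim_col A} (col_indep A)"
proof -
  have eq: "col_indep A = (\<lambda>S. S \<subseteq> {..<dim_col A} \<and> rind (\<lambda>i j. real_of_int (A $$ (i,j))) {..<dim_row A} S)"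
    by (rule ext) (rule col_indep_rind)
  show ?thesis unfolding eq by (rule vec_matroid)
qed

lemma matroidD:
  assumes "matroid E ind"
  shows matroid_fin: "finite E"
    and matroid_sub: "ind X \<Longrightarrow> X \<subseteq> E"
    and matroid_empty: "ind {}"
    and matroid_down: "ind Y \<Longrightarrow> X \<subseteq> Y \<Longrightarrow> ind X"
    and matroid_aug: "ind X \<Longrightarrow> ind Y \<Longrightarrow> card X < card Y \<Longrightarrow> \<exists>y\<in>Y - X. ind (insert y X)"
  using assms unfolding matroid_def by blast+

lemma matroidI:
  assumes "finite E" "\<And>X. ind X \<Longrightarrow> X \<subseteq> E" "ind {}" "\<And>X Y. ind Y \<Longrightarrow> X \<subseteq> Y \<Longrightarrow> ind X"
    "\<And>X Y. ind X \<Longrightarrow> ind Y \<Longrightarrow> card X < card Y \<Longrightarrow> \<exists>y\<in>Y - X. ind (insert y X)"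
  shows "matroid E ind"
  unfolding matroid_def using assms by blast

lemma basis_ofD:
  assumes "basis_of E ind B"
  shows "ind B" "ind X \<Longrightarrow> B \<subseteq> X \<Longrightarrow> X = B"
  using assms unfolding basis_of_def by blast+

lemma basis_ofI:
  assumes "ind B" "\<And>X. ind X \<Longrightarrow> B \<subseteq> X \<Longrightarrow> X = B"
  shows "basis_of E ind B"
  unfolding basis_of_def using assms by blast

lemma matroid_card_le_basis:
  assumes "matroid E ind" "ind X" "basis_of E ind B"
  shows "card X \<le> card B"
proof (rule ccontr)
  assume "\<not> ?thesis"
  then have "card B < card X" by simp
  then obtain y where y: "y \<in> X - B" "ind (insert y B)"
    using matroid_aug[OF assms(1) basis_ofD(1)[OF assms(3)] assms(2)] by blast
  then have "insert y B = B" using basis_ofD(2)[OF assms(3) y(2)] by blast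
  then show False using y by blast
qed

lemma matroid_max_subset:
  assumes "matroid E ind" "S \<subseteq> E"
  shows "\<exists>I. I \<subseteq> S \<and> ind I \<and> (\<forall>J. ind J \<and> I \<subseteq> J \<and> J \<subseteq> S \<longrightarrow> J = I)"
proof -
  have fin: "finite S" using assms finite_subset matroid_fin by blast
  define F where "F = {I. I \<subseteq> S \<and> ind I}"
  have fF: "finite F" unfolding F_def using fin by (simp add: finite_subset[of _ "Pow S"] Collect_mono)
  have neF: "{} \<in> F" unfolding F_def using matroid_empty[OF assms(1)] by simp
  have "Max (card ` F) \<in> card ` F" using fF neF by (intro Max_in) auto
  then obtain I where I: "I \<in> F" "card I = Max (card ` F)" by auto
  have "J = I" if "ind J" "I \<subseteq> J" "J \<subseteq> S" for J
  proof -
    have "J \<in> F" unfolding F_def using that by blast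
    then have "card J \<le> card I" using I(2) fF by simp
    moreover have "finite J" using that(3) fin finite_subset by blast
    ultimately show ?thesis using that(2) card_subset_eq by (metis antisym card_mono)
  qed
  then show ?thesis using I(1) unfolding F_def by blast
qed

lemma matroid_basis_exists:
  assumes "matroid E ind"
  shows "\<exists>B. basis_of E ind B"
proof -
  obtain I where I: "I \<subseteq> E" "ind I" "\<forall>J. ind J \<and> I \<subseteq> J \<and> J \<subseteq> E \<longrightarrow> J = I"
    using matroid_max_subset[OF assms order_refl] by blast
  have "basis_of E ind I"
    by (rule basis_ofI[of ind, OF I(2)]) (use I(3) matroid_sub[OF assms] in blast)
  then show ?thesis by blast
qed

lemma matroid_transfer:
  assumes "matroid E' ind'" "bij_betw f E E'" "\<And>X. X \<subseteq> E \<Longrightarrow> (ind X \<longleftrightarrow> ind' (f ` X))"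
    "\<And>X. ind X \<Longrightarrow> X \<subseteq> E"
  shows "matroid E ind"
proof (rule matroidI)
  have inj: "inj_on f E" using assms(2) bij_betw_def by blast
  show "finite E" using matroid_fin[OF assms(1)] assms(2) bij_betw_finite by blast
  show "\<And>X. ind X \<Longrightarrow> X \<subseteq> E" by (rule assms(4))
  show "ind {}" using assms(3)[of "{}"] matroid_empty[OF assms(1)] by simp
  show "ind X" if "ind Y" "X \<subseteq> Y" for X Y
  proof -
    have "Y \<subseteq> E" using assms(4) that by blast
    then have "ind' (f ` Y)" using assms(3) that by blast
    then have "ind' (f ` X)" using matroid_down[OF assms(1)] that(2) by (meson image_mono)
    then show ?thesis using assms(3) \<open>Y \<subseteq> E\<close> that(2) by (meson order_trans)
  qed
  show "\<exists>y\<in>Y - X. ind (insert y X)" if h: "ind X" "ind Y" "card X < card Y" for X Y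
  proof -
    have XE: "X \<subseteq> E" "Y \<subseteq> E" using h assms(4) by auto
    have c: "card (f ` X) = card X" "card (f ` Y) = card Y"
      using inj XE by (auto intro!: card_image inj_on_subset[OF inj])
    have i: "ind' (f ` X)" "ind' (f ` Y)" using h XE assms(3) by auto
    obtain y' where y': "y' \<in> f ` Y - f ` X" "ind' (insert y' (f ` X))"
      using matroid_aug[OF assms(1) i] c h(3) by auto
    then obtain y where y: "y \<in> Y" "y' = f y" by blast
    then have "y \<notin> X" using y' by blast
    moreover have "insert y X \<subseteq> E" using XE y by blast
    moreover have "f ` insert y X = insert y' (f ` X)" using y by simp
    ultimately have "ind (insert y X)" using assms(3) y' by metis
    then show ?thesis using y \<open>y \<notin> X\<close> by blast
  qed
qed

lemma basis_transfer:
  assumes "bij_betw f E E'" "\<And>X. X \<subseteq> E \<Longrightarrow> (ind X \<longleftrightarrow> ind' (f ` X))"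
    "\<And>X. ind X \<Longrightarrow> X \<subseteq> E" "\<And>X. ind' X \<Longrightarrow> X \<subseteq> E'" "B \<subseteq> E"
  shows "basis_of E ind B \<longleftrightarrow> basis_of E' ind' (f ` B)"
proof -
  have inj: "inj_on f E" using bij_betw_imp_inj_on[OF assms(1)] .
  have im: "f ` E = E'" using bij_betw_imp_surj_on[OF assms(1)] .
  show ?thesis
  proof
    assume b: "basis_of E ind B"
    show "basis_of E' ind' (f ` B)"
    proof (rule basis_ofI)
      show "ind' (f ` B)" using basis_ofD(1)[OF b] assms(2)[OF assms(5)] by simp
      fix X' assume h: "ind' X'" "f ` B \<subseteq> X'"
      define X where "X = inv_into E f ` X'"
      have X'E: "X' \<subseteq> E'" using h(1) by (rule assms(4))
      have fX: "f ` X = X'" unfolding X_def by (rule image_inv_into_cancel[OF im X'E])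
      have XE: "X \<subseteq> E"
      proof
        fix x assume "x \<in> X"
        then obtain x' where "x' \<in> X'" "x = inv_into E f x'" unfolding X_def by blast
        then show "x \<in> E" using X'E im inv_into_into[of x' f E] by blast
      qed
      have "ind X" using assms(2)[OF XE] fX h(1) by simp
      moreover have "B \<subseteq> X"
      proof
        fix b assume "b \<in> B"
        then have "f b \<in> f ` X" using h(2) fX by (metis image_eqI subsetD)
        moreover have "b \<in> E" using assms(5) \<open>b \<in> B\<close> by blast
        ultimately show "b \<in> X" using inj_on_image_mem_iff[OF inj _ XE] by blast
      qed
      ultimately have "X = B" by (rule basis_ofD(2)[OF b])
      then show "X' = f ` B" using fX by simp
    qed
  next
    assume b: "basis_of E' ind' (f ` B)"
    show "basis_of E ind B"
    proof (rule basis_ofI)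
      show "ind B" using basis_ofD(1)[OF b] assms(2)[OF assms(5)] by simp
      fix X assume h: "ind X" "B \<subseteq> X"
      have XE: "X \<subseteq> E" using h(1) by (rule assms(3))
      have "ind' (f ` X)" using assms(2)[OF XE] h(1) by simp
      moreover have "f ` B \<subseteq> f ` X" using h(2) by (rule image_mono)
      ultimately have "f ` X = f ` B" by (rule basis_ofD(2)[OF b])
      then show "X = B" using inj_on_image_eq_iff[OF inj XE assms(5)] by blast
    qed
  qed
qed


definition smat :: "(nat \<Rightarrow> nat \<Rightarrow> 'a) \<Rightarrow> nat set \<Rightarrow> nat set \<Rightarrow> 'a mat" where
  "smat f R C = mat (card R) (card C) (\<lambda>(a,b). f (pick R a) (pick C b))"

definition sdet :: "(nat \<Rightarrow> nat \<Rightarrow> 'a :: comm_ring_1) \<Rightarrow> nat set \<Rightarrow> nat set \<Rightarrow> 'a" where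
  "sdet f R C = det (smat f R C)"

lemma smat_carrier: "smat f R C \<in> carrier_mat (card R) (card C)"
  unfolding smat_def by simp

lemma smat_index: "a < card R \<Longrightarrow> b < card C \<Longrightarrow> smat f R C $$ (a,b) = f (pick R a) (pick C b)"
  unfolding smat_def by simp

lemma pick_in: "finite S \<Longrightarrow> k < card S \<Longrightarrow> pick S k \<in> S"
  using pick_in_set by blast

lemma pick_inj: "finite S \<Longrightarrow> inj_on (pick S) {..<card S}"
proof (rule inj_onI)
  fix x y assume "finite S" "x \<in> {..<card S}" "y \<in> {..<card S}" "pick S x = pick S y"
  then show "x = y" using pick_mono[of _ S] by (metis lessThan_iff linorder_neqE_nat less_irrefl)
qed

lemma pick_image: "finite S \<Longrightarrow> pick S ` {..<card S} = S"
proof -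
  assume f: "finite S"
  have sub: "pick S ` {..<card S} \<subseteq> S" using pick_in[OF f] by blast
  have "card (pick S ` {..<card S}) = card S" using card_image[OF pick_inj[OF f]] by simp
  then show ?thesis using card_subset_eq[OF f sub] by blast
qed

lemma sum_pick: "finite S \<Longrightarrow> (\<Sum>k<card S. g (pick S k)) = (\<Sum>s\<in>S. g s)"
proof -
  assume f: "finite S"
  have "(\<Sum>s\<in>S. g s) = (\<Sum>s\<in>pick S ` {..<card S}. g s)" using pick_image[OF f] by simp
  also have "\<dots> = (\<Sum>k<card S. g (pick S k))" using sum.reindex[OF pick_inj[OF f]] by simp
  finally show ?thesis by simp
qed

lemma pick_index_less: "finite S \<Longrightarrow> (r::nat) \<in> S \<Longrightarrow> card {x\<in>S. x < r} < card S"
proof -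
  assume a: "finite S" "r \<in> S"
  have "{x\<in>S. x < r} \<subseteq> S - {r}" by auto
  then have "card {x\<in>S. x < r} \<le> card (S - {r})" using a by (intro card_mono) auto
  also have "\<dots> < card S" using a card_gt_0_iff[of S] by auto
  finally show ?thesis .
qed

lemma pick_eq_iff: "finite S \<Longrightarrow> a < card S \<Longrightarrow> b < card S \<Longrightarrow> pick S a = pick S b \<longleftrightarrow> a = b"
  using pick_inj[of S] unfolding inj_on_def by auto

lemma pick_less_iff: "finite S \<Longrightarrow> a < card S \<Longrightarrow> b < card S \<Longrightarrow> pick S a < pick S b \<longleftrightarrow> a < b"
  by (metis pick_mono linorder_neqE_nat less_imp_not_less less_irrefl)

lemma submatrix_smat:
  assumes "R \<subseteq> {..<dim_row A}" "C \<subseteq> {..<dim_col A}"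
  shows "submatrix A R C = smat (\<lambda>i j. A $$ (i,j)) R C"
proof -
  have "{i. i < dim_row A \<and> i \<in> R} = R" "{j. j < dim_col A \<and> j \<in> C} = C" using assms by auto
  then show ?thesis unfolding submatrix_def smat_def by simp
qed

lemma pick_delete:
  assumes f: "finite R" and i0: "i0 < card R" and a: "a < card R - 1"
  shows "pick (R - {pick R i0}) a = pick R (if a < i0 then a else Suc a)"
proof -
  define a' where "a' = (if a < i0 then a else Suc a)"
  have a': "a' < card R" "a' \<noteq> i0" using a i0 by (auto simp: a'_def)
  define x where "x = pick R a'"
  define r0 where "r0 = pick R i0"
  have xR: "x \<in> R" unfolding x_def using pick_in[OF f a'(1)] .
  have ne: "x \<noteq> r0" unfolding x_def r0_def using pick_eq_iff[OF f a'(1) i0] a'(2) by simp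
  have cx: "card {y\<in>R. y < x} = a'" unfolding x_def using card_pick a'(1) by blast
  have "card {y \<in> R - {r0}. y < x} = a"
  proof (cases "a < i0")
    case True
    then have "x < r0" unfolding x_def r0_def a'_def using pick_less_iff[OF f _ i0] a' True
      by (simp add: a'_def)
    then have "{y \<in> R - {r0}. y < x} = {y\<in>R. y < x}" by auto
    then show ?thesis using cx True by (simp add: a'_def)
  next
    case False
    then have "r0 < x" unfolding x_def r0_def using pick_less_iff[OF f i0 a'(1)] by (simp add: a'_def)
    then have e: "{y \<in> R - {r0}. y < x} = {y\<in>R. y < x} - {r0}" by auto
    have "r0 \<in> {y\<in>R. y < x}" using \<open>r0 < x\<close> pick_in[OF f i0] r0_def by auto
    then have "card {y \<in> R - {r0}. y < x} = a' - 1" unfolding e using cx f by simp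
    then show ?thesis using False by (simp add: a'_def)
  qed
  then have "pick (R - {r0}) a = x" using pick_card_in_set[of x "R - {r0}"] xR ne by simp
  then show ?thesis unfolding x_def r0_def a'_def .
qed

lemma mat_delete_smat:
  assumes f: "finite R" "finite C" and i0: "i0 < card R" and j0: "j0 < card C"
  shows "mat_delete (smat f R C) i0 j0 = smat f (R - {pick R i0}) (C - {pick C j0})"
proof -
  have cR: "card (R - {pick R i0}) = card R - 1" using pick_in[OF f(1) i0] f by simp
  have cC: "card (C - {pick C j0}) = card C - 1" using pick_in[OF f(2) j0] f by simp
  show ?thesis
  proof (rule eq_matI)
    show "dim_row (mat_delete (smat f R C) i0 j0) = dim_row (smat f (R - {pick R i0}) (C - {pick C j0}))"
      using cR by (simp add: smat_def)
    show "dim_col (mat_delete (smat f R C) i0 j0) = dim_col (smat f (R - {pick R i0}) (C - {pick C j0}))"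
      using cC by (simp add: smat_def)
    fix i j assume i: "i < dim_row (smat f (R - {pick R i0}) (C - {pick C j0}))"
      and j: "j < dim_col (smat f (R - {pick R i0}) (C - {pick C j0}))"
    have i': "i < card R - 1" "j < card C - 1" using i j cR cC by (simp_all add: smat_def)
    have "mat_delete (smat f R C) i0 j0 $$ (i, j) =
      f (pick R (if i < i0 then i else Suc i)) (pick C (if j < j0 then j else Suc j))"
      unfolding mat_delete_def using i' by (simp add: smat_def)
    also have "\<dots> = f (pick (R - {pick R i0}) i) (pick (C - {pick C j0}) j)"
      using pick_delete[OF f(1) i0 i'(1)] pick_delete[OF f(2) j0 i'(2)] by simp
    also have "\<dots> = smat f (R - {pick R i0}) (C - {pick C j0}) $$ (i, j)"
      using i j by (simp add: smat_def)
    finally show "mat_delete (smat f R C) i0 j0 $$ (i, j) = smat f (R - {pick R i0}) (C - {pick C j0}) $$ (i, j)" .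
  qed
qed

lemma sdet_unit_col:
  fixes f :: "nat \<Rightarrow> nat \<Rightarrow> 'a :: linordered_idom"
  assumes f: "finite R" "finite C" and cRC: "card R = card C" and r0: "r0 \<in> R" and c0: "c0 \<in> C"
    and unit: "\<And>i. i \<in> R \<Longrightarrow> f i c0 = (if i = r0 then 1 else 0)"
  shows "\<bar>sdet f R C\<bar> = \<bar>sdet f (R - {r0}) (C - {c0})\<bar>"
proof -
  define k where "k = card R"
  define i0 where "i0 = card {x\<in>R. x < r0}"
  define j0 where "j0 = card {x\<in>C. x < c0}"
  have i0: "i0 < k" "pick R i0 = r0" unfolding i0_def k_def
    using pick_index_less[OF f(1) r0] pick_card_in_set[OF r0] by auto
  have j0: "j0 < k" "pick C j0 = c0" unfolding j0_def k_def
    using pick_index_less[OF f(2) c0] pick_card_in_set[OF c0] cRC by auto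
  define M where "M = smat f R C"
  have M: "M \<in> carrier_mat k k" unfolding M_def k_def using smat_carrier cRC by metis
  have "det M = (\<Sum>i<k. M $$ (i,j0) * cofactor M i j0)"
    by (rule laplace_expansion_column[OF M j0(1)])
  also have "\<dots> = (\<Sum>i<k. (if i = i0 then cofactor M i j0 else 0))"
  proof (rule sum.cong[OF refl])
    fix i assume "i \<in> {..<k}"
    then have i: "i < k" by simp
    have "M $$ (i,j0) = f (pick R i) c0" unfolding M_def using i j0 cRC smat_index[of i R j0 C f] k_def by simp
    also have "\<dots> = (if pick R i = r0 then 1 else 0)" using unit pick_in[OF f(1)] i k_def by simp
    also have "\<dots> = (if i = i0 then 1 else 0)" using pick_eq_iff[OF f(1), of i i0] i i0 k_def by auto
    finally show "M $$ (i,j0) * cofactor M i j0 = (if i = i0 then cofactor M i j0 else 0)" by simp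
  qed
  also have "\<dots> = cofactor M i0 j0" using i0 by simp
  finally have "det M = (-1)^(i0+j0) * det (mat_delete M i0 j0)" unfolding cofactor_def .
  then have "\<bar>det M\<bar> = \<bar>det (mat_delete M i0 j0)\<bar>" by (simp add: abs_mult)
  moreover have "mat_delete M i0 j0 = smat f (R - {r0}) (C - {c0})"
    unfolding M_def using mat_delete_smat[OF f, of i0 j0] i0 j0 cRC k_def by simp
  ultimately show ?thesis unfolding sdet_def M_def by simp
qed

lemma sdet_zero_col:
  assumes f: "finite R" "finite C" and cRC: "card R = card C" and c0: "c0 \<in> C"
    and z: "\<And>i. i \<in> R \<Longrightarrow> f i c0 = 0"
  shows "sdet f R C = 0"
proof -
  define k where "k = card R"
  define j0 where "j0 = card {x\<in>C. x < c0}"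
  have j0: "j0 < k" "pick C j0 = c0" unfolding j0_def k_def
    using pick_index_less[OF f(2) c0] pick_card_in_set[OF c0] cRC by auto
  define M where "M = smat f R C"
  have M: "M \<in> carrier_mat k k" unfolding M_def k_def using smat_carrier cRC by metis
  have "det M = (\<Sum>i<k. M $$ (i,j0) * cofactor M i j0)"
    by (rule laplace_expansion_column[OF M j0(1)])
  also have "\<dots> = 0"
  proof (rule sum.neutral, rule ballI)
    fix i assume "i \<in> {..<k}"
    then have i: "i < k" by simp
    have "M $$ (i,j0) = f (pick R i) c0" unfolding M_def using i j0 cRC smat_index[of i R j0 C f] k_def by simp
    also have "\<dots> = 0" using z pick_in[OF f(1)] i k_def by simp
    finally show "M $$ (i,j0) * cofactor M i j0 = 0" by simp
  qed
  finally show ?thesis unfolding sdet_def M_def .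
qed

lemma sdet_unit_cols:
  fixes f :: "nat \<Rightarrow> nat \<Rightarrow> 'a :: linordered_idom"
  assumes "finite L"
  shows "finite R \<Longrightarrow> finite C \<Longrightarrow> card R = card C \<Longrightarrow> L \<subseteq> C \<Longrightarrow> inj_on \<sigma> L \<Longrightarrow> \<sigma> ` L \<subseteq> R \<Longrightarrow>
    (\<And>l i. l \<in> L \<Longrightarrow> i \<in> R \<Longrightarrow> f i l = (if i = \<sigma> l then 1 else 0)) \<Longrightarrow>
    \<bar>sdet f R C\<bar> = \<bar>sdet f (R - \<sigma> ` L) (C - L)\<bar>"
  using assms
proof (induction L arbitrary: R C rule: finite_induct)
  case empty
  then show ?case by simp
next
  case (insert l L)
  have l: "l \<in> C" "\<sigma> l \<in> R" using insert.prems by auto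
  have step: "\<bar>sdet f R C\<bar> = \<bar>sdet f (R - {\<sigma> l}) (C - {l})\<bar>"
    by (rule sdet_unit_col[OF insert.prems(1,2,3) l(2) l(1)]) (use insert.prems(7) in auto)
  have "\<sigma> l \<notin> \<sigma> ` (L - {l})" using insert.prems(5) by (simp add: inj_on_insert)
  moreover have "L - {l} = L" using insert.hyps(2) by simp
  ultimately have nl: "\<sigma> l \<notin> \<sigma> ` L" by simp
  have "\<bar>sdet f (R - {\<sigma> l}) (C - {l})\<bar> = \<bar>sdet f (R - {\<sigma> l} - \<sigma> ` L) (C - {l} - L)\<bar>"
  proof (rule insert.IH)
    show "finite (R - {\<sigma> l})" "finite (C - {l})" using insert.prems by auto
    show "card (R - {\<sigma> l}) = card (C - {l})" using insert.prems l by simp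
    show "L \<subseteq> C - {l}" using insert.prems insert.hyps by auto
    show "inj_on \<sigma> L" using insert.prems by auto
    show "\<sigma> ` L \<subseteq> R - {\<sigma> l}"
    proof
      fix w assume w: "w \<in> \<sigma> ` L"
      then have "w \<in> R" using insert.prems(6) by blast
      moreover have "w \<noteq> \<sigma> l" using nl w by blast
      ultimately show "w \<in> R - {\<sigma> l}" by blast
    qed
    show "\<And>l' i. l' \<in> L \<Longrightarrow> i \<in> R - {\<sigma> l} \<Longrightarrow> f i l' = (if i = \<sigma> l' then 1 else 0)"
      using insert.prems(7) by auto
  qed
  moreover have "R - {\<sigma> l} - \<sigma> ` L = R - \<sigma> ` insert l L" "C - {l} - L = C - insert l L" by auto
  ultimately show ?case using step by simp
qed

lemma sdet_mult:
  fixes f h :: "nat \<Rightarrow> nat \<Rightarrow> 'a :: comm_ring_1"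
  assumes fin: "finite R" "finite B" "finite C" and c: "card R = card B" "card B = card C"
    and g: "\<And>i j. i \<in> R \<Longrightarrow> j \<in> C \<Longrightarrow> g i j = (\<Sum>b\<in>B. f i b * h b j)"
  shows "sdet g R C = sdet f R B * sdet h B C"
proof -
  have "smat g R C = smat f R B * smat h B C"
  proof (rule eq_matI)
    fix i j assume i: "i < dim_row (smat f R B * smat h B C)" and j: "j < dim_col (smat f R B * smat h B C)"
    then have i': "i < card R" and j': "j < card C" by (simp_all add: smat_def)
    have "(smat f R B * smat h B C) $$ (i,j) = (\<Sum>k<card B. f (pick R i) (pick B k) * h (pick B k) (pick C j))"
      using i' j' by (simp add: smat_def scalar_prod_def lessThan_atLeast0)
    also have "\<dots> = (\<Sum>b\<in>B. f (pick R i) b * h b (pick C j))"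
      by (rule sum_pick[OF fin(2)])
    also have "\<dots> = g (pick R i) (pick C j)" using g pick_in fin i' j' by metis
    also have "\<dots> = smat g R C $$ (i,j)" using i' j' by (simp add: smat_def)
    finally show "smat g R C $$ (i, j) = (smat f R B * smat h B C) $$ (i, j)" by simp
  qed (simp_all add: smat_def)
  moreover have "smat f R B \<in> carrier_mat (card R) (card R)" "smat h B C \<in> carrier_mat (card R) (card R)"
    using smat_carrier[of f R B] smat_carrier[of h B C] c by simp_all
  ultimately show ?thesis unfolding sdet_def using det_mult by metis
qed

lemma sdet_transpose: "card R = card C \<Longrightarrow> sdet f R C = sdet (\<lambda>i j. f j i) C R"
proof -
  assume c: "card R = card C"
  have "transpose_mat (smat f R C) = smat (\<lambda>i j. f j i) C R"
    by (rule eq_matI) (auto simp: smat_def)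
  then show ?thesis unfolding sdet_def using det_transpose[of "smat f R C" "card R"] smat_carrier c
    by metis
qed

lemma sdet_neg: "card R = card C \<Longrightarrow> \<bar>sdet (\<lambda>i j. - f i j) R C\<bar> = \<bar>sdet f R C :: 'a :: linordered_idom\<bar>"
proof -
  assume c: "card R = card C"
  have "smat (\<lambda>i j. - f i j) R C = (-1) \<cdot>\<^sub>m smat f R C"
    by (rule eq_matI) (auto simp: smat_def)
  then show ?thesis unfolding sdet_def by (simp add: abs_mult smat_def)
qed

lemma sdet_of_int: "real_of_int (sdet f R C) = sdet (\<lambda>i j. real_of_int (f i j)) R C"
proof -
  have "map_mat real_of_int (smat f R C) = smat (\<lambda>i j. real_of_int (f i j)) R C"
    by (rule eq_matI) (auto simp: smat_def)
  then show ?thesis unfolding sdet_def by (metis of_int_hom.hom_det)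
qed

lemma pick_comp:
  assumes N: "finite N" and I: "I \<subseteq> {..<card N}" and x: "x < card I"
  shows "pick (pick N ` I) x = pick N (pick I x)"
proof -
  have fI: "finite I" using I finite_subset by blast
  define y where "y = pick I x"
  have yI: "y \<in> I" unfolding y_def using pick_in[OF fI x] .
  have yN: "y < card N" using yI I by auto
  have inj: "inj_on (pick N) I" using pick_inj[OF N] I inj_on_subset by blast
  have "{w \<in> pick N ` I. w < pick N y} = pick N ` {v\<in>I. v < y}"
  proof (rule equalityI; rule subsetI)
    fix w assume "w \<in> {w \<in> pick N ` I. w < pick N y}"
    then obtain v where v: "v \<in> I" "w = pick N v" "pick N v < pick N y" by auto
    then have "v < y" using pick_less_iff[OF N] I yN by auto
    then show "w \<in> pick N ` {v\<in>I. v < y}" using v by auto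
  next
    fix w assume "w \<in> pick N ` {v\<in>I. v < y}"
    then obtain v where v: "v \<in> I" "w = pick N v" "v < y" by auto
    then have "pick N v < pick N y" using pick_less_iff[OF N] I yN by auto
    then show "w \<in> {w \<in> pick N ` I. w < pick N y}" using v by auto
  qed
  then have "card {w \<in> pick N ` I. w < pick N y} = card {v\<in>I. v < y}"
    using card_image[OF inj_on_subset[OF inj]] by auto
  also have "\<dots> = x" unfolding y_def using card_pick x by blast
  finally have "card {w \<in> pick N ` I. w < pick N y} = x" .
  then show ?thesis using pick_card_in_set[of "pick N y" "pick N ` I"] yI unfolding y_def by auto
qed

lemma sdet_pick_rows:
  assumes N: "finite N" and I: "I \<subseteq> {..<card N}"
  shows "sdet (\<lambda>a j. f (pick N a) j) I J = sdet f (pick N ` I) J"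
proof -
  have inj: "inj_on (pick N) I" using pick_inj[OF N] I inj_on_subset by blast
  have c: "card (pick N ` I) = card I" using card_image[OF inj] .
  have "smat (\<lambda>a j. f (pick N a) j) I J = smat f (pick N ` I) J"
    by (rule eq_matI) (auto simp: smat_def c pick_comp[OF N I])
  then show ?thesis unfolding sdet_def by simp
qed


lemma sdet_nonzero_rind:
  fixes g :: "nat \<Rightarrow> nat \<Rightarrow> real"
  assumes f: "finite R" "finite C" and c: "card R = card C" and nz: "sdet g R C \<noteq> 0"
  shows "rind g R C"
proof (rule ccontr)
  assume "\<not> rind g R C"
  then obtain cf where h: "\<forall>i\<in>R. (\<Sum>j\<in>C. cf j * g i j) = 0" and j: "\<exists>j\<in>C. cf j \<noteq> 0"
    unfolding rind_def by blast
  define k where "k = card R"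
  define v where "v = vec k (\<lambda>\<beta>. cf (pick C \<beta>))"
  define M where "M = smat g R C"
  have M: "M \<in> carrier_mat k k" unfolding M_def k_def using smat_carrier c by metis
  have vc: "v \<in> carrier_vec k" unfolding v_def by simp
  have vnz: "v \<noteq> 0\<^sub>v k"
  proof
    assume v0: "v = 0\<^sub>v k"
    from j obtain j where jC: "j \<in> C" "cf j \<noteq> 0" by blast
    define \<beta> where "\<beta> = card {x\<in>C. x < j}"
    have \<beta>: "\<beta> < k" "pick C \<beta> = j" unfolding \<beta>_def k_def
      using pick_index_less[OF f(2) jC(1)] pick_card_in_set[OF jC(1)] c by auto
    have "v $ \<beta> = cf j" unfolding v_def using \<beta> by simp
    then show False using v0 \<beta> jC by simp
  qed
  have "M *\<^sub>v v = 0\<^sub>v k"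
  proof (rule eq_vecI)
    show "dim_vec (M *\<^sub>v v) = dim_vec (0\<^sub>v k)" using M by simp
    fix \<alpha> assume "\<alpha> < dim_vec (0\<^sub>v k)"
    then have \<alpha>: "\<alpha> < k" by simp
    have "(M *\<^sub>v v) $ \<alpha> = (\<Sum>\<beta><k. g (pick R \<alpha>) (pick C \<beta>) * cf (pick C \<beta>))"
      using \<alpha> M c unfolding M_def v_def k_def
      by (simp add: smat_def scalar_prod_def lessThan_atLeast0)
    also have "\<dots> = (\<Sum>j\<in>C. g (pick R \<alpha>) j * cf j)"
      unfolding k_def c by (rule sum_pick[OF f(2)])
    also have "\<dots> = 0" using h pick_in[OF f(1)] \<alpha> k_def by (simp add: mult.commute)
    finally show "(M *\<^sub>v v) $ \<alpha> = 0\<^sub>v k $ \<alpha>" using \<alpha> by simp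
  qed
  then have "det M = 0" using det_0_iff_vec_prod_zero_field[OF M] vc vnz by blast
  then show False using nz unfolding sdet_def M_def by simp
qed

lemma sdet_zero_not_rind:
  fixes g :: "nat \<Rightarrow> nat \<Rightarrow> real"
  assumes f: "finite R" "finite C" and c: "card R = card C" and z: "sdet g R C = 0"
  shows "\<not> rind g R C"
proof
  assume ri: "rind g R C"
  define k where "k = card R"
  define M where "M = smat g R C"
  have M: "M \<in> carrier_mat k k" unfolding M_def k_def using smat_carrier c by metis
  obtain v where v: "v \<in> carrier_vec k" "v \<noteq> 0\<^sub>v k" "M *\<^sub>v v = 0\<^sub>v k"
    using det_0_iff_vec_prod_zero_field[OF M] z unfolding sdet_def M_def by blast
  define cf where "cf = (\<lambda>j. v $ card {x\<in>C. x < j})"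
  have cfp: "cf (pick C \<beta>) = v $ \<beta>" if "\<beta> < k" for \<beta>
    unfolding cf_def using card_pick[of \<beta> C] that c k_def by simp
  have "\<forall>i\<in>R. (\<Sum>j\<in>C. cf j * g i j) = 0"
  proof
    fix i assume iR: "i \<in> R"
    define \<alpha> where "\<alpha> = card {x\<in>R. x < i}"
    have \<alpha>: "\<alpha> < k" "pick R \<alpha> = i" unfolding \<alpha>_def k_def
      using pick_index_less[OF f(1) iR] pick_card_in_set[OF iR] by auto
    have "(\<Sum>j\<in>C. cf j * g i j) = (\<Sum>\<beta><k. cf (pick C \<beta>) * g i (pick C \<beta>))"
      unfolding k_def c by (rule sum_pick[OF f(2), symmetric])
    also have "\<dots> = (\<Sum>\<beta><k. M $$ (\<alpha>, \<beta>) * v $ \<beta>)"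
      by (rule sum.cong[OF refl]) (use \<alpha> cfp c k_def in \<open>simp add: M_def smat_def\<close>)
    also have "\<dots> = (M *\<^sub>v v) $ \<alpha>"
      using \<alpha> M v(1) by (simp add: scalar_prod_def lessThan_atLeast0 mult.commute)
    also have "\<dots> = 0" using v(3) \<alpha> by simp
    finally show "(\<Sum>j\<in>C. cf j * g i j) = 0" .
  qed
  then have all0: "\<forall>j\<in>C. cf j = 0" using ri unfolding rind_def by blast
  have "v = 0\<^sub>v k"
  proof (rule eq_vecI)
    fix \<beta> assume "\<beta> < dim_vec (0\<^sub>v k)"
    then have \<beta>: "\<beta> < k" by simp
    have "pick C \<beta> \<in> C" using pick_in[OF f(2)] \<beta> c k_def by simp
    then show "v $ \<beta> = 0\<^sub>v k $ \<beta>" using all0 cfp[OF \<beta>] \<beta> by simp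
  qed (use v(1) in simp)
  then show False using v(2) by simp
qed

lemma sdet_nonzero_iff:
  fixes g :: "nat \<Rightarrow> nat \<Rightarrow> real"
  assumes f: "finite R" "finite C" and c: "card R = card C"
  shows "sdet g R C \<noteq> 0 \<longleftrightarrow> rind g R C"
  using sdet_nonzero_rind[OF f c] sdet_zero_not_rind[OF f c] by blast


lemma smat_cong: "(\<And>i j. i \<in> R \<Longrightarrow> j \<in> C \<Longrightarrow> f i j = g i j) \<Longrightarrow> finite R \<Longrightarrow> finite C \<Longrightarrow>
  smat f R C = smat g R C"
  by (rule eq_matI) (auto simp: smat_def pick_in)

lemma sdet_cong: "(\<And>i j. i \<in> R \<Longrightarrow> j \<in> C \<Longrightarrow> f i j = g i j) \<Longrightarrow> finite R \<Longrightarrow> finite C \<Longrightarrow>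
  sdet f R C = sdet g R C"
  unfolding sdet_def using smat_cong by metis

lemma row_select:
  fixes Ma :: "nat \<Rightarrow> nat \<Rightarrow> real"
  assumes B: "finite B" "rind Ma {..<m} B"
  shows "\<exists>I \<subseteq> {..<m}. card I = card B \<and> sdet Ma I B \<noteq> 0"
proof -
  define M' where "M' = (\<lambda>b i. Ma i b)"
  have mat: "matroid {..<m} (\<lambda>S. S \<subseteq> {..<m} \<and> rind M' B S)" by (rule vec_matroid)
  obtain I where I: "I \<subseteq> {..<m}" "rind M' B I"
    and mx: "\<forall>J. (J \<subseteq> {..<m} \<and> rind M' B J) \<and> I \<subseteq> J \<and> J \<subseteq> {..<m} \<longrightarrow> J = I"
    using matroid_max_subset[OF mat order_refl] by blast
  have fI: "finite I" using I(1) finite_subset by blast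
  have c1: "card I \<le> card B"
  proof (rule ccontr)
    assume "\<not> ?thesis"
    then have "card B < card I" by simp
    from elim_lemma[OF B(1) fI this, of "\<lambda>b i. Ma i b"] obtain x where
      x: "\<exists>v\<in>I. x v \<noteq> 0" "\<forall>b\<in>B. (\<Sum>i\<in>I. Ma i b * x i) = 0" by blast
    have "\<forall>b\<in>B. (\<Sum>i\<in>I. x i * M' b i) = 0" using x(2) by (simp add: M'_def mult.commute)
    then have "\<forall>i\<in>I. x i = 0" using I(2) unfolding rind_def by blast
    then show False using x(1) by blast
  qed
  have c2: "card B \<le> card I"
  proof (rule ccontr)
    assume "\<not> ?thesis"
    then have "card I < card B" by simp
    from elim_lemma[OF fI B(1) this, of Ma] obtain u where
      u: "\<exists>b\<in>B. u b \<noteq> 0" "\<forall>i\<in>I. (\<Sum>b\<in>B. Ma i b * u b) = 0" by blast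
    have all: "(\<Sum>b\<in>B. u b * Ma i' b) = 0" if i': "i' \<in> {..<m}" for i'
    proof (cases "i' \<in> I")
      case True
      then show ?thesis using u(2) by (simp add: mult.commute)
    next
      case False
      have "insert i' I \<noteq> I" using False by blast
      then have "\<not> rind M' B (insert i' I)" using mx I(1) i' by blast
      from span_lemma[OF fI I(2) this False] obtain d where
        d: "\<forall>b\<in>B. M' b i' = (\<Sum>i\<in>I. d i * M' b i)" by blast
      have "(\<Sum>b\<in>B. u b * Ma i' b) = (\<Sum>b\<in>B. u b * (\<Sum>i\<in>I. d i * Ma i b))"
        by (rule sum.cong[OF refl]) (use d in \<open>simp add: M'_def\<close>)
      also have "\<dots> = (\<Sum>b\<in>B. \<Sum>i\<in>I. d i * (Ma i b * u b))"
        unfolding sum_distrib_left by (intro sum.cong refl) (simp add: mult_ac)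
      also have "\<dots> = (\<Sum>i\<in>I. \<Sum>b\<in>B. d i * (Ma i b * u b))" by (rule sum.swap)
      also have "\<dots> = (\<Sum>i\<in>I. d i * (\<Sum>b\<in>B. Ma i b * u b))" by (simp add: sum_distrib_left)
      also have "\<dots> = 0" using u(2) by simp
      finally show ?thesis .
    qed
    then have "\<forall>b\<in>B. u b = 0" using B(2) unfolding rind_def by blast
    then show False using u(1) by blast
  qed
  have cIB: "card I = card B" using c1 c2 by simp
  have "sdet Ma I B = sdet M' B I" unfolding M'_def by (rule sdet_transpose[OF cIB])
  moreover have "sdet M' B I \<noteq> 0" using sdet_nonzero_iff[OF B(1) fI] cIB I(2) by simp
  ultimately show ?thesis using I(1) cIB by auto
qed

definition Ma :: "int mat \<Rightarrow> nat \<Rightarrow> nat \<Rightarrow> real" where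
  "Ma A = (\<lambda>i j. real_of_int (A $$ (i,j)))"

lemma col_indep_Ma: "col_indep A S \<longleftrightarrow> S \<subseteq> {..<dim_col A} \<and> rind (Ma A) {..<dim_row A} S"
  unfolding Ma_def by (rule col_indep_rind)

lemma rank_lower:
  assumes I: "I \<subseteq> {..<dim_row A}" and J: "J \<subseteq> {..<dim_col A}" and nz: "sdet (Ma A) I J \<noteq> 0"
  shows "card J \<le> int_rank A"
proof -
  define Ar where "Ar = map_mat real_of_int A"
  have Ar: "Ar \<in> carrier_mat (dim_row A) (dim_col A)" unfolding Ar_def by simp
  have fin: "finite I" "finite J" using I J finite_subset by auto
  have "submatrix Ar I J = smat (\<lambda>i j. Ar $$ (i,j)) I J"
    using I J Ar by (intro submatrix_smat) auto
  also have "\<dots> = smat (Ma A) I J"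
  proof (rule smat_cong[OF _ fin])
    fix i j assume "i \<in> I" "j \<in> J"
    then have "i < dim_row A" "j < dim_col A" using I J by auto
    then show "Ar $$ (i, j) = Ma A i j" by (simp add: Ar_def Ma_def)
  qed
  finally have "det (submatrix Ar I J) \<noteq> 0" using nz unfolding sdet_def by simp
  from vec_space.rank_gt_minor[OF Ar this] have "card {j. j < dim_col A \<and> j \<in> J} \<le> int_rank A"
    unfolding int_rank_def Ar_def by simp
  moreover have "{j. j < dim_col A \<and> j \<in> J} = J" using J by auto
  ultimately show ?thesis by simp
qed

lemma rank_upper:
  fixes A :: "real mat" and r :: nat
  assumes A: "A \<in> carrier_mat n nc"
    and bound: "\<And>J. J \<subseteq> {..<nc} \<Longrightarrow> rind (\<lambda>i j. A $$ (i,j)) {..<n} J \<Longrightarrow> card J \<le> r"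
  shows "vec_space.rank n A \<le> r"
proof -
  interpret vs: vec_space "TYPE(real)" n .
  obtain S where S: "maximal S (\<lambda>T. T \<subseteq> set (cols A) \<and> vs.lin_indpt T)"
    using maximal_exists[of "(\<lambda>T. T \<subseteq> set (cols A) \<and> vs.lin_indpt T)" "card (set (cols A))" "{}"]
    by (meson List.finite_set card_mono empty_iff empty_subsetI vs.finite_lin_indpt2 rev_finite_subset)
  have rk: "vs.rank A = card S" using vs.rank_card_indpt[OF A S] .
  have SC: "S \<subseteq> set (cols A)" "vs.lin_indpt S" using S unfolding maximal_def by auto
  have fS: "finite S" using SC(1) finite_subset by blast
  have Scar: "S \<subseteq> carrier_vec n" using SC(1) A cols_dim by blast
  define jj where "jj = (\<lambda>v. SOME j. j < nc \<and> col A j = v)"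
  have jj: "jj v < nc \<and> col A (jj v) = v" if "v \<in> S" for v
  proof -
    have "v \<in> set (cols A)" using SC(1) that by blast
    then obtain j where "j < length (cols A)" "cols A ! j = v" by (metis in_set_conv_nth)
    then have "j < nc \<and> col A j = v" using A by auto
    then show ?thesis unfolding jj_def by (rule someI)
  qed
  have inj: "inj_on jj S" by (rule inj_onI) (metis jj)
  define J where "J = jj ` S"
  have cJ: "card J = card S" unfolding J_def using card_image[OF inj] .
  have Jsub: "J \<subseteq> {..<nc}" unfolding J_def using jj by auto
  have "rind (\<lambda>i j. A $$ (i,j)) {..<n} J"
    unfolding rind_def
  proof (intro allI impI ballI)
    fix c j assume h: "\<forall>i\<in>{..<n}. (\<Sum>j\<in>J. c j * A $$ (i, j)) = 0" and jJ: "j \<in> J"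
    show "c j = 0"
    proof (rule ccontr)
      assume cj: "c j \<noteq> 0"
      obtain v0 where v0: "v0 \<in> S" "j = jj v0" using jJ unfolding J_def by blast
      define a where "a = (\<lambda>v. c (jj v))"
      have lc: "vs.lincomb a S = 0\<^sub>v n"
      proof (rule eq_vecI)
        have "vs.lincomb a S \<in> carrier_vec n" using vs.lincomb_closed[OF Scar] by simp
        then show "dim_vec (vs.lincomb a S) = dim_vec (0\<^sub>v n)" by simp
        fix i assume "i < dim_vec (0\<^sub>v n)"
        then have i: "i < n" by simp
        have "vs.lincomb a S $ i = (\<Sum>v\<in>S. a v * v $ i)" by (rule vs.lincomb_index[OF i Scar])
        also have "\<dots> = (\<Sum>v\<in>S. c (jj v) * A $$ (i, jj v))"
        proof (rule sum.cong[OF refl])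
          fix v assume v: "v \<in> S"
          have "v $ i = col A (jj v) $ i" using jj[OF v] by simp
          also have "\<dots> = A $$ (i, jj v)" using jj[OF v] i A by (metis carrier_matD index_col)
          finally show "a v * v $ i = c (jj v) * A $$ (i, jj v)" by (simp add: a_def)
        qed
        also have "\<dots> = (\<Sum>j\<in>J. c j * A $$ (i, j))"
          unfolding J_def using sum.reindex[OF inj, of "\<lambda>j. c j * A $$ (i, j)"] by simp
        also have "\<dots> = 0" using h i by simp
        finally show "vs.lincomb a S $ i = 0\<^sub>v n $ i" using i by simp
      qed
      have "vs.lin_dep S"
        unfolding vs.lin_dep_def
        using fS lc v0 cj by (intro exI[of _ S] exI[of _ a] exI[of _ v0]) (auto simp: a_def)
      then show False using SC(2) by blast
    qed
  qed
  then have "card J \<le> r" using bound Jsub by blast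
  then show ?thesis using rk cJ by simp
qed


lemma rind_cong: "(\<And>i j. i \<in> R \<Longrightarrow> j \<in> S \<Longrightarrow> f i j = g i j) \<Longrightarrow> rind f R S = rind g R S"
  unfolding rind_def by (simp cong: sum.cong)

lemma rind_rows_mono: "rind f R S \<Longrightarrow> R \<subseteq> R' \<Longrightarrow> rind f R' S"
  unfolding rind_def by blast

definition Ai :: "int mat \<Rightarrow> nat \<Rightarrow> nat \<Rightarrow> int" where
  "Ai A = (\<lambda>i j. A $$ (i,j))"

lemma sdet_Ma: "sdet (Ma A) R C = real_of_int (sdet (Ai A) R C)"
  unfolding Ma_def Ai_def by (simp add: sdet_of_int)

lemma det_submatrix_Ai: "I \<subseteq> {..<dim_row A} \<Longrightarrow> J \<subseteq> {..<dim_col A} \<Longrightarrow>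
   det (submatrix A I J) = sdet (Ai A) I J"
  unfolding sdet_def Ai_def by (simp add: submatrix_smat)

lemma basis_rank:
  assumes B: "basis_of {..<dim_col A} (col_indep A) B"
  shows "int_rank A = card B"
proof -
  have mat: "matroid {..<dim_col A} (col_indep A)" by (rule col_indep_matroid)
  have Bi: "col_indep A B" using basis_ofD(1)[OF B] .
  then have Bsub: "B \<subseteq> {..<dim_col A}" and Br: "rind (Ma A) {..<dim_row A} B"
    using col_indep_Ma by auto
  have fB: "finite B" using Bsub finite_subset by blast
  obtain I where I: "I \<subseteq> {..<dim_row A}" "card I = card B" "sdet (Ma A) I B \<noteq> 0"
    using row_select[OF fB Br] by blast
  have ge: "card B \<le> int_rank A" by (rule rank_lower[OF I(1) Bsub I(3)])
  have le: "int_rank A \<le> card B"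
    unfolding int_rank_def
  proof (rule rank_upper)
    show "map_mat real_of_int A \<in> carrier_mat (dim_row A) (dim_col A)" by simp
    fix J assume J: "J \<subseteq> {..<dim_col A}"
      and r: "rind (\<lambda>i j. map_mat real_of_int A $$ (i, j)) {..<dim_row A} J"
    have "rind (Ma A) {..<dim_row A} J"
      using r by (subst rind_cong[of _ _ _ "\<lambda>i j. map_mat real_of_int A $$ (i, j)"])
        (use J in \<open>auto simp: Ma_def\<close>)
    then have "col_indep A J" using J col_indep_Ma by blast
    then show "card J \<le> card B" by (rule matroid_card_le_basis[OF mat _ B])
  qed
  show ?thesis using ge le by simp
qed

locale dmod =
  fixes A :: "int mat"
  assumes dm: "delta_modular 2 A"
begin

abbreviation "m \<equiv> dim_row A"
abbreviation "n \<equiv> dim_col A"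

lemma matA: "matroid {..<n} (col_indep A)" by (rule col_indep_matroid)

definition rk where "rk = int_rank A"

lemma ind_card: "col_indep A X \<Longrightarrow> card X \<le> rk"
proof -
  assume X: "col_indep A X"
  obtain B where B: "basis_of {..<n} (col_indep A) B" using matroid_basis_exists[OF matA] by blast
  show ?thesis using matroid_card_le_basis[OF matA X B] basis_rank[OF B] rk_def by simp
qed

definition PP where "PP = {(I,J). I \<subseteq> {..<m} \<and> J \<subseteq> {..<n} \<and> card I = rk \<and> card J = rk \<and> sdet (Ai A) I J \<noteq> 0}"

lemma PP_fin: "finite PP"
proof -
  have "PP \<subseteq> Pow {..<m} \<times> Pow {..<n}" unfolding PP_def by auto
  then show ?thesis using finite_subset by blast
qed

lemma PP_ne: "PP \<noteq> {}"
proof -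
  obtain B where B: "basis_of {..<n} (col_indep A) B" using matroid_basis_exists[OF matA] by blast
  have Bi: "col_indep A B" using basis_ofD(1)[OF B] .
  then have Bsub: "B \<subseteq> {..<n}" and Br: "rind (Ma A) {..<m} B" using col_indep_Ma by auto
  have fB: "finite B" using Bsub finite_subset by blast
  obtain I where I: "I \<subseteq> {..<m}" "card I = card B" "sdet (Ma A) I B \<noteq> 0"
    using row_select[OF fB Br] by blast
  have "(I, B) \<in> PP" unfolding PP_def using I Bsub basis_rank[OF B] rk_def sdet_Ma[of A I B] by auto
  then show ?thesis by blast
qed

definition IB where "IB = (SOME p. p \<in> PP \<and> (\<forall>q\<in>PP. \<bar>sdet (Ai A) (fst p) (snd p)\<bar> \<le> \<bar>sdet (Ai A) (fst q) (snd q)\<bar>))"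

lemma IB_ex: "\<exists>p. p \<in> PP \<and> (\<forall>q\<in>PP. \<bar>sdet (Ai A) (fst p) (snd p)\<bar> \<le> \<bar>sdet (Ai A) (fst q) (snd q)\<bar>)"
proof -
  define g where "g = (\<lambda>q. \<bar>sdet (Ai A) (fst q) (snd q)\<bar>)"
  have "Min (g ` PP) \<in> g ` PP" using PP_fin PP_ne by (intro Min_in) auto
  then obtain p where p: "p \<in> PP" "g p = Min (g ` PP)" by auto
  have "\<forall>q\<in>PP. g p \<le> g q" using p(2) PP_fin by simp
  then show ?thesis using p(1) unfolding g_def by blast
qed

lemma IB: "IB \<in> PP" "\<And>q. q \<in> PP \<Longrightarrow> \<bar>sdet (Ai A) (fst IB) (snd IB)\<bar> \<le> \<bar>sdet (Ai A) (fst q) (snd q)\<bar>"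
  using someI_ex[OF IB_ex] unfolding IB_def[symmetric] by blast+

definition I0 where "I0 = fst IB"
definition B0 where "B0 = snd IB"
definition D0 where "D0 = sdet (Ai A) I0 B0"

lemma I0B0: "I0 \<subseteq> {..<m}" "B0 \<subseteq> {..<n}" "card I0 = rk" "card B0 = rk" "D0 \<noteq> 0"
  using IB(1) unfolding PP_def I0_def B0_def D0_def by (auto simp: case_prod_beta)

lemma fin0: "finite I0" "finite B0" using I0B0 finite_subset by auto

lemma D0_min: "J \<subseteq> {..<n} \<Longrightarrow> card J = rk \<Longrightarrow> sdet (Ai A) I0 J \<noteq> 0 \<Longrightarrow> \<bar>D0\<bar> \<le> \<bar>sdet (Ai A) I0 J\<bar>"
  using IB(2)[of "(I0, J)"] I0B0 unfolding PP_def D0_def I0_def B0_def by auto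

lemma minor_bound: "J \<subseteq> {..<n} \<Longrightarrow> card J = rk \<Longrightarrow> \<bar>sdet (Ai A) I0 J\<bar> \<le> 2"
proof -
  assume J: "J \<subseteq> {..<n}" "card J = rk"
  have "\<bar>det (submatrix A I0 J)\<bar> \<le> 2"
    using dm[unfolded delta_modular_def, rule_format, of I0 J] I0B0 J unfolding rk_def by blast
  then show ?thesis using det_submatrix_Ai[of I0 A J] I0B0 J by simp
qed

lemma B0_indep: "col_indep A B0"
proof -
  have "sdet (Ma A) I0 B0 \<noteq> 0" using I0B0(5) sdet_Ma[of A I0 B0] D0_def by simp
  then have "rind (Ma A) I0 B0" using sdet_nonzero_iff[OF fin0] I0B0 by simp
  then have "rind (Ma A) {..<m} B0" using rind_rows_mono I0B0(1) by blast
  then show ?thesis using col_indep_Ma I0B0(2) by blast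
qed

lemma B0_basis: "basis_of {..<n} (col_indep A) B0"
proof (rule basis_ofI[of "col_indep A", OF B0_indep])
  fix X assume X: "col_indep A X" "B0 \<subseteq> X"
  have "card X \<le> card B0" using ind_card[OF X(1)] I0B0 by simp
  moreover have "finite X" using X(1) matroid_sub[OF matA] finite_subset by blast
  ultimately show "X = B0" using X(2) card_subset_eq by (metis antisym card_mono)
qed

definition tt :: "nat \<Rightarrow> nat \<Rightarrow> real" where
  "tt b j = (if j \<in> B0 then (if b = j then 1 else 0)
     else (SOME d. \<forall>i\<in>{..<m}. Ma A i j = (\<Sum>x\<in>B0. d x * Ma A i x)) b)"

lemma tt_B0: "j \<in> B0 \<Longrightarrow> tt b j = (if b = j then 1 else 0)"
  unfolding tt_def by simp

lemma T1: assumes j: "j < n" and i: "i < m" shows "Ma A i j = (\<Sum>b\<in>B0. tt b j * Ma A i b)"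
proof (cases "j \<in> B0")
  case True
  have "(\<Sum>b\<in>B0. tt b j * Ma A i b) = (\<Sum>b\<in>B0. if b = j then Ma A i b else 0)"
    by (rule sum.cong[OF refl]) (simp add: tt_B0[OF True])
  also have "\<dots> = Ma A i j" using True fin0 by simp
  finally show ?thesis by simp
next
  case False
  have "insert j B0 \<noteq> B0" using False by blast
  moreover have "insert j B0 \<subseteq> {..<n}" using j I0B0 by auto
  ultimately have "\<not> col_indep A (insert j B0)" using basis_ofD(2)[OF B0_basis, of "insert j B0"] by blast
  then have nr: "\<not> rind (Ma A) {..<m} (insert j B0)" using col_indep_Ma \<open>insert j B0 \<subseteq> {..<n}\<close> by blast
  have r0: "rind (Ma A) {..<m} B0" using B0_indep col_indep_Ma by blast
  have ex: "\<exists>d. \<forall>i\<in>{..<m}. Ma A i j = (\<Sum>x\<in>B0. d x * Ma A i x)"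
    by (rule span_lemma[OF fin0(2) r0 nr False])
  define d0 where "d0 = (SOME d. \<forall>i\<in>{..<m}. Ma A i j = (\<Sum>x\<in>B0. d x * Ma A i x))"
  have d0: "\<forall>i\<in>{..<m}. Ma A i j = (\<Sum>x\<in>B0. d0 x * Ma A i x)"
    unfolding d0_def by (rule someI_ex[OF ex])
  have ttj: "tt b j = d0 b" for b unfolding tt_def d0_def using False by simp
  show ?thesis using d0 i by (simp only: ttj lessThan_iff)
qed

lemma T2: "col_indep A S \<longleftrightarrow> S \<subseteq> {..<n} \<and> rind tt B0 S"
proof -
  have r0: "rind (Ma A) {..<m} B0" using B0_indep col_indep_Ma by blast
  have key: "(\<Sum>j\<in>S. c j * Ma A i j) = (\<Sum>b\<in>B0. (\<Sum>j\<in>S. c j * tt b j) * Ma A i b)"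
    if "S \<subseteq> {..<n}" "i < m" for S c i
  proof -
    have "(\<Sum>j\<in>S. c j * Ma A i j) = (\<Sum>j\<in>S. c j * (\<Sum>b\<in>B0. tt b j * Ma A i b))"
      by (rule sum.cong[OF refl]) (use T1 that in auto)
    also have "\<dots> = (\<Sum>j\<in>S. \<Sum>b\<in>B0. c j * tt b j * Ma A i b)"
      unfolding sum_distrib_left by (intro sum.cong refl) (simp add: mult_ac)
    also have "\<dots> = (\<Sum>b\<in>B0. \<Sum>j\<in>S. c j * tt b j * Ma A i b)" by (rule sum.swap)
    also have "\<dots> = (\<Sum>b\<in>B0. (\<Sum>j\<in>S. c j * tt b j) * Ma A i b)" by (simp add: sum_distrib_right)
    finally show ?thesis .
  qed
  show ?thesis
  proof
    assume ci: "col_indep A S"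
    then have S: "S \<subseteq> {..<n}" "rind (Ma A) {..<m} S" using col_indep_Ma by auto
    have "rind tt B0 S"
      unfolding rind_def
    proof (intro allI impI)
      fix c assume h: "\<forall>b\<in>B0. (\<Sum>j\<in>S. c j * tt b j) = 0"
      have "\<forall>i\<in>{..<m}. (\<Sum>j\<in>S. c j * Ma A i j) = 0"
      proof
        fix i assume "i \<in> {..<m}"
        then show "(\<Sum>j\<in>S. c j * Ma A i j) = 0" using key[OF S(1), of i c] h by simp
      qed
      then show "\<forall>j\<in>S. c j = 0" using S(2) unfolding rind_def by blast
    qed
    then show "S \<subseteq> {..<n} \<and> rind tt B0 S" using S by blast
  next
    assume h: "S \<subseteq> {..<n} \<and> rind tt B0 S"
    have "rind (Ma A) {..<m} S"
      unfolding rind_def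
    proof (intro allI impI)
      fix c assume hc: "\<forall>i\<in>{..<m}. (\<Sum>j\<in>S. c j * Ma A i j) = 0"
      have "\<forall>i\<in>{..<m}. (\<Sum>b\<in>B0. (\<Sum>j\<in>S. c j * tt b j) * Ma A i b) = 0"
        using hc key[of S] h by simp
      then have "\<forall>b\<in>B0. (\<Sum>j\<in>S. c j * tt b j) = 0"
        using spec[OF r0[unfolded rind_def], of "\<lambda>b. \<Sum>j\<in>S. c j * tt b j"] by simp
      then show "\<forall>j\<in>S. c j = 0" using h unfolding rind_def by blast
    qed
    then show "col_indep A S" using h col_indep_Ma by blast
  qed
qed

lemma T3: assumes J: "J \<subseteq> {..<n}" "card J = rk"
  shows "sdet (Ma A) I0 J = sdet (Ma A) I0 B0 * sdet tt B0 J"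
proof (rule sdet_mult)
  show "finite I0" "finite B0" using fin0 by auto
  show "finite J" using J finite_subset by blast
  show "card I0 = card B0" "card B0 = card J" using I0B0 J by auto
  fix i j assume "i \<in> I0" "j \<in> J"
  then have "i < m" "j < n" using I0B0 J by auto
  then show "Ma A i j = (\<Sum>b\<in>B0. Ma A i b * tt b j)" using T1 by (simp add: mult.commute)
qed

lemma D0_bounds: "1 \<le> \<bar>D0\<bar>" "\<bar>D0\<bar> \<le> 2"
  using I0B0(5) minor_bound[OF I0B0(2,4)] D0_def by auto

lemma T4: assumes J: "J \<subseteq> {..<n}" "card J = rk"
  shows "\<exists>z::int. sdet tt B0 J = of_int z \<and> \<bar>z\<bar> \<le> 2"
proof -
  define d where "d = sdet (Ai A) I0 J"
  have d2: "\<bar>d\<bar> \<le> 2" unfolding d_def by (rule minor_bound[OF J])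
  have eq: "real_of_int d = real_of_int D0 * sdet tt B0 J"
    using T3[OF J] sdet_Ma[of A I0 J] sdet_Ma[of A I0 B0] unfolding d_def D0_def by simp
  have dvd: "D0 dvd d"
  proof (cases "d = 0")
    case True then show ?thesis by simp
  next
    case False
    have "\<bar>D0\<bar> \<le> \<bar>d\<bar>" using D0_min[OF J] False unfolding d_def by simp
    have D: "D0 = 1 \<or> D0 = -1 \<or> D0 = 2 \<or> D0 = -2" using D0_bounds by auto
    then show ?thesis
    proof (elim disjE)
      assume "D0 = 2"
      then have "d = 2 \<or> d = -2" using \<open>\<bar>D0\<bar> \<le> \<bar>d\<bar>\<close> d2 by auto
      then show ?thesis using \<open>D0 = 2\<close> by auto
    next
      assume "D0 = -2"
      then have "d = 2 \<or> d = -2" using \<open>\<bar>D0\<bar> \<le> \<bar>d\<bar>\<close> d2 by auto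
      then show ?thesis using \<open>D0 = -2\<close> by auto
    qed auto
  qed
  then obtain z where z: "d = D0 * z" by blast
  have "sdet tt B0 J = of_int z" using eq z I0B0(5) by simp
  moreover have "\<bar>z\<bar> \<le> 2"
  proof -
    have "\<bar>z\<bar> \<le> \<bar>D0\<bar> * \<bar>z\<bar>" using D0_bounds by (simp add: mult_le_cancel_right1)
    also have "\<dots> = \<bar>d\<bar>" using z by (simp add: abs_mult)
    finally show ?thesis using d2 by simp
  qed
  ultimately show ?thesis by blast
qed

end


lemma rind_pick_rows:
  assumes N: "finite N"
  shows "rind (\<lambda>a j. f (pick N a) j) {..<card N} X = rind f N X"
proof -
  have "(\<forall>a\<in>{..<card N}. P (pick N a)) \<longleftrightarrow> (\<forall>k\<in>N. P k)" for P
  proof -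
    have "(\<forall>a\<in>{..<card N}. P (pick N a)) \<longleftrightarrow> (\<forall>k\<in>pick N ` {..<card N}. P k)" by simp
    then show ?thesis using pick_image[OF N] by simp
  qed
  note key = this
  show ?thesis unfolding rind_def
  proof (intro iff_allI)
    fix c
    show "((\<forall>i\<in>{..<card N}. (\<Sum>j\<in>X. c j * f (pick N i) j) = 0) \<longrightarrow> (\<forall>j\<in>X. c j = 0)) =
      ((\<forall>i\<in>N. (\<Sum>j\<in>X. c j * f i j) = 0) \<longrightarrow> (\<forall>j\<in>X. c j = 0))"
      using key[of "\<lambda>i. (\<Sum>j\<in>X. c j * f i j) = 0"] by simp
  qed
qed

lemma sdet_single: "sdet f {b} {j} = f b j"
proof -
  have "smat f {b} {j} \<in> carrier_mat 1 1" using smat_carrier[of f "{b}" "{j}"] by simp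
  then have "det (smat f {b} {j}) = smat f {b} {j} $$ (0,0)" by (rule det_single)
  also have "\<dots> = f (pick {b} 0) (pick {j} 0)" by (simp add: smat_def)
  finally have e: "det (smat f {b} {j}) = f (pick {b} 0) (pick {j} 0)" .
  have "pick {b} 0 = b" "pick {j} 0 = j" by (auto intro: Least_equality)
  then show ?thesis using e unfolding sdet_def by simp
qed

context dmod
begin

lemma T5:
  assumes R: "R \<subseteq> B0" and C: "C \<subseteq> {..<n}" and c: "card R = card C"
  shows "\<exists>z::int. \<bar>sdet tt R C\<bar> = \<bar>of_int z\<bar> \<and> \<bar>z\<bar> \<le> 2"
proof -
  have fR: "finite R" using R fin0 finite_subset by blast
  have fC: "finite C" using C finite_subset by blast
  show ?thesis
  proof (cases "C \<inter> (B0 - R) = {}")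
    case False
    then obtain c0 where c0: "c0 \<in> C" "c0 \<in> B0" "c0 \<notin> R" by blast
    have "sdet tt R C = 0"
    proof (rule sdet_zero_col[OF fR fC c c0(1)])
      fix i assume "i \<in> R"
      then have "i \<noteq> c0" using c0 by blast
      then show "tt i c0 = 0" using tt_B0[OF c0(2)] by simp
    qed
    then show ?thesis by (intro exI[of _ 0]) simp
  next
    case True
    define C' where "C' = C \<union> (B0 - R)"
    have cB: "card (B0 - R) = card B0 - card R" using R fin0 by (simp add: card_Diff_subset finite_subset)
    have cRB: "card R \<le> card B0" using R fin0 card_mono by blast
    have cC': "card C' = rk" unfolding C'_def
      using card_Un_disjoint[OF fC _ True] fin0 cB cRB c I0B0(4) by simp
    have C'sub: "C' \<subseteq> {..<n}" unfolding C'_def using C I0B0(2) by auto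
    obtain z where z: "sdet tt B0 C' = of_int z" "\<bar>z\<bar> \<le> 2" using T4[OF C'sub cC'] by blast
    have "\<bar>sdet tt B0 C'\<bar> = \<bar>sdet tt (B0 - (\<lambda>x. x) ` (B0 - R)) (C' - (B0 - R))\<bar>"
    proof (rule sdet_unit_cols)
      show "finite (B0 - R)" "finite B0" using fin0 by auto
      show "finite C'" using C'sub finite_subset by blast
      show "card B0 = card C'" using cC' I0B0 by simp
      show "B0 - R \<subseteq> C'" unfolding C'_def by blast
      show "inj_on (\<lambda>x. x) (B0 - R)" by simp
      show "(\<lambda>x. x) ` (B0 - R) \<subseteq> B0" by auto
      fix l i assume "l \<in> B0 - R" "i \<in> B0"
      then show "tt i l = (if i = l then 1 else 0)" using tt_B0 by simp
    qed
    moreover have "B0 - (\<lambda>x. x) ` (B0 - R) = R" using R by auto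
    moreover have "C' - (B0 - R) = C" unfolding C'_def using True by auto
    ultimately have "\<bar>sdet tt R C\<bar> = \<bar>of_int z\<bar>" using z by simp
    then show ?thesis using z by blast
  qed
qed

lemma T6: assumes b: "b \<in> B0" and j: "j < n" shows "\<exists>z::int. tt b j = of_int z"
proof (cases "j \<in> B0")
  case True
  then show ?thesis using tt_B0[OF True, of b] by (cases "b = j") (auto intro: exI[of _ 1] exI[of _ 0])
next
  case False
  obtain z where z: "\<bar>sdet tt {b} {j}\<bar> = \<bar>of_int z\<bar>" using T5[of "{b}" "{j}"] b j by auto
  then have "\<bar>tt b j\<bar> = \<bar>of_int z\<bar>" by (simp add: sdet_single)
  then have "tt b j = of_int z \<or> tt b j = of_int (- z)" by (auto simp: abs_if split: if_splits)
  then show ?thesis by blast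
qed

definition N where "N = {..<n} - B0"

lemma N_fin: "finite N" unfolding N_def by simp

lemma N_sub: "N \<subseteq> {..<n}" "N \<inter> B0 = {}" unfolding N_def by auto

definition ttz :: "nat \<Rightarrow> nat \<Rightarrow> int" where "ttz b j = \<lfloor>tt b j\<rfloor>"

lemma ttz: "b \<in> B0 \<Longrightarrow> j < n \<Longrightarrow> real_of_int (ttz b j) = tt b j"
  using T6 unfolding ttz_def by fastforce

definition K :: "int mat" where
  "K = mat (card N) n (\<lambda>(a,j). if j \<in> B0 then - ttz j (pick N a) else (if j = pick N a then 1 else 0))"

definition Kf :: "nat \<Rightarrow> nat \<Rightarrow> real" where
  "Kf k j = (if j \<in> B0 then - tt j k else (if j = k then 1 else 0))"

lemma K_dims: "dim_row K = card N" "dim_col K = n" unfolding K_def by simp_all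

lemma K_entry: assumes a: "a < card N" and j: "j < n"
  shows "Ma K a j = Kf (pick N a) j"
proof -
  have p: "pick N a \<in> N" using pick_in[OF N_fin a] .
  then have "pick N a < n" using N_sub by auto
  then show ?thesis unfolding Ma_def Kf_def K_def using a j ttz by auto
qed

lemma K1: "col_indep K X \<longleftrightarrow> X \<subseteq> {..<n} \<and> rind Kf N X"
proof -
  have "X \<subseteq> {..<n} \<Longrightarrow> rind (Ma K) {..<card N} X = rind (\<lambda>a j. Kf (pick N a) j) {..<card N} X"
    by (rule rind_cong) (auto simp: K_entry)
  then show ?thesis using col_indep_Ma[of K X] K_dims rind_pick_rows[OF N_fin, of Kf X] by auto
qed

lemma ORTH:
  assumes S': "S' \<subseteq> {..<n}" and I: "I \<subseteq> S'" "col_indep A I"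
    and mx: "\<forall>J. col_indep A J \<and> I \<subseteq> J \<and> J \<subseteq> S' \<longrightarrow> J = I"
    and u: "\<forall>x\<in>I. (\<Sum>b\<in>B0. u b * tt b x) = 0"
    and j: "j \<in> S'"
  shows "(\<Sum>b\<in>B0. u b * tt b j) = 0"
proof (cases "j \<in> I")
  case True then show ?thesis using u by blast
next
  case False
  have fI: "finite I" using finite_subset[OF order_trans[OF I(1) S']] by simp
  have rI: "rind tt B0 I" using I(2) T2[of I] by simp
  have "insert j I \<noteq> I" using False by blast
  moreover have "insert j I \<subseteq> S'" using I j by blast
  ultimately have "\<not> col_indep A (insert j I)" using mx by blast
  moreover have "insert j I \<subseteq> {..<n}" using S' \<open>insert j I \<subseteq> S'\<close> by blast
  ultimately have "\<not> rind tt B0 (insert j I)" using T2[of "insert j I"] by blast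
  from span_lemma[OF fI rI this False] obtain d where d: "\<forall>b\<in>B0. tt b j = (\<Sum>x\<in>I. d x * tt b x)" by blast
  have "(\<Sum>b\<in>B0. u b * tt b j) = (\<Sum>b\<in>B0. u b * (\<Sum>x\<in>I. d x * tt b x))"
  proof (rule sum.cong[OF refl])
    fix b assume "b \<in> B0"
    then have "tt b j = (\<Sum>x\<in>I. d x * tt b x)" using d by blast
    then show "u b * tt b j = u b * (\<Sum>x\<in>I. d x * tt b x)" by (rule arg_cong)
  qed
  also have "\<dots> = (\<Sum>b\<in>B0. \<Sum>x\<in>I. d x * (u b * tt b x))"
    unfolding sum_distrib_left by (intro sum.cong refl) (simp add: mult_ac)
  also have "\<dots> = (\<Sum>x\<in>I. \<Sum>b\<in>B0. d x * (u b * tt b x))" by (rule sum.swap)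
  also have "\<dots> = (\<Sum>x\<in>I. d x * (\<Sum>b\<in>B0. u b * tt b x))" by (simp add: sum_distrib_left)
  also have "\<dots> = 0" using u by simp
  finally show ?thesis .
qed

lemma y_B0: "b \<in> B0 \<Longrightarrow> (\<Sum>b'\<in>B0. u b' * tt b' b) = u b"
proof -
  assume b: "b \<in> B0"
  have "(\<Sum>b'\<in>B0. u b' * tt b' b) = (\<Sum>b'\<in>B0. if b' = b then u b' else 0)"
    by (rule sum.cong[OF refl]) (simp add: tt_B0[OF b])
  then show ?thesis using b fin0 by simp
qed

lemma Kf_sum:
  assumes X: "X \<subseteq> {..<n}" and k: "k \<in> N"
  shows "(\<Sum>j\<in>X. c j * Kf k j) = (if k \<in> X then c k else 0) - (\<Sum>b\<in>X \<inter> B0. c b * tt b k)"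
proof -
  have fX: "finite X" using X finite_subset by blast
  have kB: "k \<notin> B0" using k N_sub by blast
  have "(\<Sum>j\<in>X. c j * Kf k j) = (\<Sum>j\<in>X \<inter> B0. c j * Kf k j) + (\<Sum>j\<in>X - B0. c j * Kf k j)"
    using sum.Int_Diff[OF fX] by blast
  also have "(\<Sum>j\<in>X \<inter> B0. c j * Kf k j) = (\<Sum>j\<in>X \<inter> B0. - (c j * tt j k))"
    by (rule sum.cong[OF refl]) (simp add: Kf_def)
  also have "\<dots> = - (\<Sum>b\<in>X \<inter> B0. c b * tt b k)" by (rule sum_negf)
  also have "(\<Sum>j\<in>X - B0. c j * Kf k j) = (\<Sum>j\<in>X - B0. if j = k then c j else 0)"
    by (rule sum.cong[OF refl]) (auto simp: Kf_def)
  also have "\<dots> = (if k \<in> X - B0 then c k else 0)" using fX by simp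
  also have "\<dots> = (if k \<in> X then c k else 0)" using kB by simp
  finally show ?thesis by simp
qed

lemma K2:
  assumes X: "X \<subseteq> {..<n}"
  shows "rind Kf N X \<longleftrightarrow> (\<exists>B'. basis_of {..<n} (col_indep A) B' \<and> X \<inter> B' = {})"
proof
  assume rK: "rind Kf N X"
  show "\<exists>B'. basis_of {..<n} (col_indep A) B' \<and> X \<inter> B' = {}"
  proof (rule ccontr)
    assume nob: "\<not> ?thesis"
    define S' where "S' = {..<n} - X"
    obtain I where I: "I \<subseteq> S'" "col_indep A I" and mx: "\<forall>J. col_indep A J \<and> I \<subseteq> J \<and> J \<subseteq> S' \<longrightarrow> J = I"
      using matroid_max_subset[OF matA, of S'] unfolding S'_def by blast
    have S'sub: "S' \<subseteq> {..<n}" unfolding S'_def by blast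
    have fI: "finite I" using finite_subset[OF order_trans[OF I(1) S'sub]] by simp
    have "\<not> basis_of {..<n} (col_indep A) I" using nob I(1) unfolding S'_def by blast
    then obtain Y where Y: "col_indep A Y" "I \<subseteq> Y" "Y \<noteq> I"
      using basis_ofI[of "col_indep A" I "{..<n}"] I(2) by blast
    have fY: "finite Y" using finite_subset[OF matroid_sub[OF matA Y(1)]] by simp
    have "I \<subset> Y" using Y(2,3) by blast
    then have "card I < card Y" using psubset_card_mono[OF fY] by blast
    also have "card Y \<le> rk" using ind_card[OF Y(1)] .
    finally have cI: "card I < card B0" using I0B0 by simp
    from elim_lemma[OF fI fin0(2) cI, of "\<lambda>x b. tt b x"] obtain u where
      u: "\<exists>b\<in>B0. u b \<noteq> 0" "\<forall>x\<in>I. (\<Sum>b\<in>B0. tt b x * u b) = 0" by blast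
    have u': "\<forall>x\<in>I. (\<Sum>b\<in>B0. u b * tt b x) = 0" using u(2) by (simp add: mult.commute)
    define y where "y = (\<lambda>j. \<Sum>b\<in>B0. u b * tt b j)"
    have y0: "y j = 0" if "j \<in> S'" for j
      unfolding y_def by (rule ORTH[OF S'sub I mx u' that])
    have yB: "y b = u b" if "b \<in> B0" for b unfolding y_def by (rule y_B0[OF that])
    have uX: "u b = 0" if "b \<in> B0" "b \<notin> X" for b
    proof -
      have "b \<in> S'" using that I0B0 unfolding S'_def by auto
      then show ?thesis using y0 yB that by metis
    qed
    have yk: "y k = (\<Sum>b\<in>X \<inter> B0. y b * tt b k)" for k
    proof -
      have "y k = (\<Sum>b\<in>B0. u b * tt b k)" unfolding y_def ..
      also have "\<dots> = (\<Sum>b\<in>X \<inter> B0. u b * tt b k)"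
        by (rule sum.mono_neutral_right[OF fin0(2)]) (use uX in auto)
      also have "\<dots> = (\<Sum>b\<in>X \<inter> B0. y b * tt b k)"
        by (rule sum.cong[OF refl]) (use yB in auto)
      finally show ?thesis .
    qed
    have "\<forall>k\<in>N. (\<Sum>j\<in>X. y j * Kf k j) = 0"
    proof
      fix k assume k: "k \<in> N"
      show "(\<Sum>j\<in>X. y j * Kf k j) = 0"
      proof (cases "k \<in> X")
        case True
        then show ?thesis unfolding Kf_sum[OF X k] using yk[of k] by simp
      next
        case False
        have "k \<in> S'" using k False N_sub unfolding S'_def by blast
        then show ?thesis unfolding Kf_sum[OF X k] using yk[of k] y0 False by simp
      qed
    qed
    then have "\<forall>j\<in>X. y j = 0" using rK unfolding rind_def by blast
    obtain b0 where b0: "b0 \<in> B0" "u b0 \<noteq> 0" using u(1) by blast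
    have "b0 \<notin> X" using b0 yB \<open>\<forall>j\<in>X. y j = 0\<close> by metis
    then show False using uX b0 by blast
  qed
next
  assume "\<exists>B'. basis_of {..<n} (col_indep A) B' \<and> X \<inter> B' = {}"
  then obtain B' where B'b: "basis_of {..<n} (col_indep A) B'" and B'd: "X \<inter> B' = {}" by blast
  have B'i: "col_indep A B'" using basis_ofD(1)[OF B'b] .
  show "rind Kf N X"
    unfolding rind_def
  proof (intro allI impI ballI)
    fix c j assume h: "\<forall>k\<in>N. (\<Sum>j\<in>X. c j * Kf k j) = 0" and jX: "j \<in> X"
    define u where "u = (\<lambda>b. if b \<in> X then c b else 0)"
    define y where "y = (\<lambda>j. \<Sum>b\<in>B0. u b * tt b j)"
    have yB: "y b = u b" if "b \<in> B0" for b unfolding y_def by (rule y_B0[OF that])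
    have yall: "y j = (if j \<in> X then c j else 0)" if "j < n" for j
    proof (cases "j \<in> B0")
      case True then show ?thesis using yB u_def by simp
    next
      case False
      then have jN: "j \<in> N" using that unfolding N_def by blast
      have "y j = (\<Sum>b\<in>X \<inter> B0. u b * tt b j)"
        unfolding y_def by (rule sum.mono_neutral_right[OF fin0(2)]) (auto simp: u_def)
      also have "\<dots> = (\<Sum>b\<in>X \<inter> B0. c b * tt b j)"
        by (rule sum.cong[OF refl]) (auto simp: u_def)
      also have "\<dots> = (if j \<in> X then c j else 0)"
        using h jN Kf_sum[OF X jN, of c] by simp
      finally show ?thesis .
    qed
    have B'sub: "B' \<subseteq> {..<n}" using matroid_sub[OF matA B'i] .
    have "\<forall>x\<in>B'. (\<Sum>b\<in>B0. u b * tt b x) = 0"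
    proof
      fix x assume x: "x \<in> B'"
      then have "x < n" "x \<notin> X" using B'sub B'd by auto
      then show "(\<Sum>b\<in>B0. u b * tt b x) = 0" using yall[of x] unfolding y_def by simp
    qed
    moreover have "\<forall>J. col_indep A J \<and> B' \<subseteq> J \<and> J \<subseteq> {..<n} \<longrightarrow> J = B'"
      using basis_ofD(2)[OF B'b] by blast
    ultimately have "y j = 0" unfolding y_def
      using ORTH[OF order_refl B'sub B'i] jX X by blast
    then show "c j = 0" using yall[of j] jX X by auto
  qed
qed

lemma KB:
  assumes R: "R \<subseteq> N" and J: "J \<subseteq> {..<n}" and c: "card R = card J"
  shows "\<bar>sdet Kf R J\<bar> \<le> 2"
proof -
  have fR: "finite R" using finite_subset[OF R N_fin] .
  have fJ: "finite J" using J finite_subset by blast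
  define L where "L = J - B0"
  show ?thesis
  proof (cases "L \<subseteq> R")
    case False
    then obtain l where l: "l \<in> J" "l \<notin> B0" "l \<notin> R" unfolding L_def by blast
    have "sdet Kf R J = 0"
    proof (rule sdet_zero_col[OF fR fJ c l(1)])
      fix i assume "i \<in> R" then show "Kf i l = 0" using l by (auto simp: Kf_def)
    qed
    then show ?thesis by simp
  next
    case True
    have fL: "finite L" using fJ L_def by simp
    have "\<bar>sdet Kf R J\<bar> = \<bar>sdet Kf (R - (\<lambda>x. x) ` L) (J - L)\<bar>"
    proof (rule sdet_unit_cols[OF fL fR fJ c])
      show "L \<subseteq> J" "inj_on (\<lambda>x. x) L" "(\<lambda>x. x) ` L \<subseteq> R" using True unfolding L_def by auto
      fix l i assume "l \<in> L" "i \<in> R"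
      then show "Kf i l = (if i = l then 1 else 0)" unfolding L_def Kf_def by auto
    qed
    also have "J - L = J \<inter> B0" unfolding L_def by auto
    finally have e1: "\<bar>sdet Kf R J\<bar> = \<bar>sdet Kf (R - L) (J \<inter> B0)\<bar>" by simp
    have cL: "card (R - L) = card (J \<inter> B0)"
    proof -
      have "card (R - L) = card R - card L" using True fR by (simp add: card_Diff_subset finite_subset)
      moreover have "card (J \<inter> B0) = card J - card L" unfolding L_def using fJ
        by (metis Diff_Diff_Int Diff_subset card_Diff_subset finite_Diff inf_commute)
      ultimately show ?thesis using c by simp
    qed
    have fRL: "finite (R - L)" "finite (J \<inter> B0)" using fR fJ by auto
    have "sdet Kf (R - L) (J \<inter> B0) = sdet (\<lambda>k b. - tt b k) (R - L) (J \<inter> B0)"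
      by (rule sdet_cong[OF _ fRL]) (auto simp: Kf_def)
    then have "\<bar>sdet Kf (R - L) (J \<inter> B0)\<bar> = \<bar>sdet (\<lambda>k b. tt b k) (R - L) (J \<inter> B0)\<bar>"
      using sdet_neg[OF cL, of "\<lambda>k b. tt b k"] by simp
    also have "sdet (\<lambda>k b. tt b k) (R - L) (J \<inter> B0) = sdet tt (J \<inter> B0) (R - L)"
      using sdet_transpose[OF cL, of "\<lambda>k b. tt b k"] by simp
    finally have e2: "\<bar>sdet Kf R J\<bar> = \<bar>sdet tt (J \<inter> B0) (R - L)\<bar>" using e1 by simp
    have "R - L \<subseteq> {..<n}" using R N_sub by auto
    then obtain z where "\<bar>sdet tt (J \<inter> B0) (R - L)\<bar> = \<bar>of_int z\<bar>" "\<bar>z\<bar> \<le> 2"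
      using T5[of "J \<inter> B0" "R - L"] cL by auto
    then show ?thesis using e2 by simp
  qed
qed

lemma K_dm: "delta_modular 2 K"
  unfolding delta_modular_def
proof (intro allI impI)
  fix I J assume h: "I \<subseteq> {..<dim_row K} \<and> J \<subseteq> {..<dim_col K} \<and> card I = int_rank K \<and> card J = int_rank K"
  then have I: "I \<subseteq> {..<card N}" and J: "J \<subseteq> {..<n}" and c: "card I = card J" using K_dims by auto
  have fI: "finite I" "finite J" using I J finite_subset by auto
  have "real_of_int (det (submatrix K I J)) = sdet (Ma K) I J"
    using det_submatrix_Ai[of I K J] I J K_dims sdet_Ma[of K I J] by simp
  also have "\<dots> = sdet (\<lambda>a j. Kf (pick N a) j) I J"
  proof (rule sdet_cong[OF _ fI])
    fix i j assume "i \<in> I" "j \<in> J"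
    then have "i < card N" "j < n" using I J by auto
    then show "Ma K i j = Kf (pick N i) j" by (rule K_entry)
  qed
  also have "\<dots> = sdet Kf (pick N ` I) J" by (rule sdet_pick_rows[OF N_fin I])
  finally have e: "real_of_int (det (submatrix K I J)) = sdet Kf (pick N ` I) J" .
  have inj: "inj_on (pick N) I" using pick_inj[OF N_fin] I inj_on_subset by blast
  have R: "pick N ` I \<subseteq> N" using pick_in[OF N_fin] I by auto
  have cR: "card (pick N ` I) = card J" using card_image[OF inj] c by simp
  have "\<bar>sdet Kf (pick N ` I) J\<bar> \<le> 2" by (rule KB[OF R J cR])
  then have "\<bar>real_of_int (det (submatrix K I J))\<bar> \<le> 2" using e by simp
  then show "\<bar>det (submatrix K I J)\<bar> \<le> 2" by linarith
qed

end


theorem corollary4p2: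
  fixes E :: "'a set" and indep :: "'a set \<Rightarrow> bool"
  assumes "in_M_delta 2 E indep"
  shows "in_M_delta 2 E (dual_indep E indep)"
proof -
  obtain A where dmA: "delta_modular 2 A" and iso: "matroid_iso E indep {..<dim_col A} (col_indep A)"
    using assms unfolding in_M_delta_def by blast
  interpret dmod A by (unfold_locales) (rule dmA)
  obtain f where mE: "matroid E indep" and bij: "bij_betw f E {..<n}"
    and eqv: "\<forall>X. X \<subseteq> E \<longrightarrow> (indep X \<longleftrightarrow> col_indep A (f ` X))"
    using iso unfolding matroid_iso_def by blast
  have inj: "inj_on f E" using bij_betw_imp_inj_on[OF bij] .
  have im: "f ` E = {..<n}" using bij_betw_imp_surj_on[OF bij] .
  have eqv': "\<And>X. X \<subseteq> E \<Longrightarrow> (indep X \<longleftrightarrow> col_indep A (f ` X))" using eqv by blast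
  have subE: "\<And>X. indep X \<Longrightarrow> X \<subseteq> E" using matroid_sub[OF mE] .
  have subA: "\<And>X. col_indep A X \<Longrightarrow> X \<subseteq> {..<n}" using matroid_sub[OF matA] .
  have bt: "\<And>B. B \<subseteq> E \<Longrightarrow> basis_of E indep B \<longleftrightarrow> basis_of {..<n} (col_indep A) (f ` B)"
    by (rule basis_transfer[of f E "{..<n}" indep "col_indep A"]) (use bij eqv' subE subA in auto)
  have key: "dual_indep E indep X \<longleftrightarrow> col_indep K (f ` X)" if XE: "X \<subseteq> E" for X
  proof -
    have fX: "f ` X \<subseteq> {..<n}" using XE im by blast
    have "col_indep K (f ` X) \<longleftrightarrow> (\<exists>B'. basis_of {..<n} (col_indep A) B' \<and> f ` X \<inter> B' = {})"
      using K1[of "f ` X"] K2[OF fX] fX by blast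
    also have "\<dots> \<longleftrightarrow> (\<exists>B. basis_of E indep B \<and> X \<inter> B = {})"
    proof
      assume "\<exists>B'. basis_of {..<n} (col_indep A) B' \<and> f ` X \<inter> B' = {}"
      then obtain B' where B'b: "basis_of {..<n} (col_indep A) B'" and B'd: "f ` X \<inter> B' = {}" by blast
      have B'sub: "B' \<subseteq> {..<n}" using subA[OF basis_ofD(1)[OF B'b]] .
      define B where "B = inv_into E f ` B'"
      have fB: "f ` B = B'" unfolding B_def using image_inv_into_cancel[OF im B'sub] .
      have BE: "B \<subseteq> E"
      proof
        fix x assume "x \<in> B"
        then obtain x' where "x' \<in> B'" "x = inv_into E f x'" unfolding B_def by blast
        then show "x \<in> E" using B'sub im inv_into_into[of x' f E] by blast
      qed
      have "basis_of E indep B" using bt[OF BE] fB B'b by simp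
      moreover have "X \<inter> B = {}"
      proof (rule ccontr)
        assume "X \<inter> B \<noteq> {}"
        then obtain x where "x \<in> X" "x \<in> B" by blast
        then have "f x \<in> f ` X \<inter> B'" using fB by blast
        then show False using B'd by blast
      qed
      ultimately show "\<exists>B. basis_of E indep B \<and> X \<inter> B = {}" by blast
    next
      assume "\<exists>B. basis_of E indep B \<and> X \<inter> B = {}"
      then obtain B where Bb: "basis_of E indep B" and Bd: "X \<inter> B = {}" by blast
      have BE: "B \<subseteq> E" using subE[OF basis_ofD(1)[OF Bb]] .
      have "basis_of {..<n} (col_indep A) (f ` B)" using bt[OF BE] Bb by simp
      moreover have "f ` X \<inter> f ` B = {}"
        using inj_on_image_Int[OF inj XE BE] Bd by simp
      ultimately show "\<exists>B'. basis_of {..<n} (col_indep A) B' \<and> f ` X \<inter> B' = {}" by blast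
    qed
    finally show ?thesis unfolding dual_indep_def using XE by blast
  qed
  have mK: "matroid {..<dim_col K} (col_indep K)" by (rule col_indep_matroid)
  then have mK': "matroid {..<n} (col_indep K)" using K_dims by simp
  have mD: "matroid E (dual_indep E indep)"
  proof (rule matroid_transfer[OF mK' bij])
    show "\<And>X. X \<subseteq> E \<Longrightarrow> dual_indep E indep X = col_indep K (f ` X)" using key by blast
    show "\<And>X. dual_indep E indep X \<Longrightarrow> X \<subseteq> E" unfolding dual_indep_def by blast
  qed
  have "matroid_iso E (dual_indep E indep) {..<dim_col K} (col_indep K)"
    unfolding matroid_iso_def using mD mK K_dims bij key by auto
  then show ?thesis unfolding in_M_delta_def using K_dm by blast
qed


end
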